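(* Let $n\ge2$ and $k$ a field. Then $\mathsf{G}^0([n],k)$ is free abelian of rank $3$ with basis $[J_{0,n}]$, $[S_{[n]}]$, $T_{[n]}=[J_{0,n-1}]+[J_{1,n}]-[J_{1,n-1}]$, and $\mathsf{E}^0([n],k)$ is free abelian of rank $2$ with basis $[J_{0,n}]$, $T_{[n]}$. In particular the natural map $\mathsf{E}^0([n],k)\to\mathsf{G}^0([n],k)$ is split injective with cokernel generated by the image of $[S_{[n]}]$ (infinite cyclic).
   Context: $[n]$ is the poset $0<1<\cdots<n$ viewed as a category; $k[n]$-modules are functors to finite-dimensional $k$-vector spaces and $\mathrm{Gr}$ is the split Grothendieck group. For $0\le a\le b\le n$, $J_{a,b}$ is the module with value $k$ at $i\in\{a,\dots,b\}$, $0$ elsewhere, and identity maps $J_{a,b}(i<j)$ for $a\le i\le j\le b$. $S_{[n]}$ is the module with value $k$ everywhere and zero maps on strict relations. $\mathcal{E}^{[n]}_1$ is the poset of strict relations $i<j$ (written $ij$) with $ij\le i'j'$ iff $i\le i'$ and $j\le j'$; $\mathcal{G}^{[n]}_1$ is the poset of strict relations with $ij\le i'j'$ iff equal or $j\le i'$. In both, $\partial_0(ij)=j$, $\partial_1(ij)=i$. $\mathsf{E}^0([n],k)$ (resp. $\mathsf{G}^0([n],k)$) is the kernel of $\partial_0^*-\partial_1^*:\mathrm{Gr}(k[n])\to\mathrm{Gr}(k\mathcal{E}^{[n]}_1)$ (resp. $\to\mathrm{Gr}(k\mathcal{G}^{[n]}_1)$), with $F^*M=M\circ F$. The natural map $\mathsf{E}^0\to\mathsf{G}^0$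 is induced by the inclusion $\mathcal{G}^{[n]}_1\subseteq\mathcal{E}^{[n]}_1$ (identity on $\mathrm{Gr}(k[n])$). *)

theory Defs
  imports "Jordan_Normal_Form.Matrix"
begin

text \<open>A representation of a poset (carrier P, order ord) over a field 'a:
  a finite-dimensional space k^(d x) at each point x, and a matrix f x y : k^(d x) -> k^(d y)
  for each relation x ord y, functorially.  Values outside the carrier / on non-relations are junk.\<close>

type_synonym ('p,'a) rep = "('p \<Rightarrow> nat) \<times> ('p \<Rightarrow> 'p \<Rightarrow> 'a mat)"

text \<open>Elements of the split Grothendieck group, as formal differences [M] - [N].\<close>
type_synonym ('p,'a) grel = "('p,'a) rep \<times> ('p,'a) rep"

definition is_rep :: "'p set \<Rightarrow> ('p \<Rightarrow> 'p \<Rightarrow> bool) \<Rightarrow> ('p,'a::field) rep \<Rightarrow> bool" where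
  "is_rep P ord M \<longleftrightarrow>
     (\<forall>x\<in>P. \<forall>y\<in>P. ord x y \<longrightarrow> snd M x y \<in> carrier_mat (fst M y) (fst M x)) \<and>
     (\<forall>x\<in>P. snd M x x = 1\<^sub>m (fst M x)) \<and>
     (\<forall>x\<in>P. \<forall>y\<in>P. \<forall>z\<in>P. ord x y \<longrightarrow> ord y z \<longrightarrow> snd M x z = snd M y z * snd M x y)"

definition rep_iso :: "'p set \<Rightarrow> ('p \<Rightarrow> 'p \<Rightarrow> bool) \<Rightarrow> ('p,'a::field) rep \<Rightarrow> ('p,'a) rep \<Rightarrow> bool" where
  "rep_iso P ord M N \<longleftrightarrow> (\<exists>\<phi> \<psi>.
     (\<forall>x\<in>P. \<phi> x \<in> carrier_mat (fst N x) (fst M x) \<and> \<psi> x \<in> carrier_mat (fst M x) (fst N x) \<and>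
            \<phi> x * \<psi> x = 1\<^sub>m (fst N x) \<and> \<psi> x * \<phi> x = 1\<^sub>m (fst M x)) \<and>
     (\<forall>x\<in>P. \<forall>y\<in>P. ord x y \<longrightarrow> snd N x y * \<phi> x = \<phi> y * snd M x y))"

definition zero_rep :: "('p,'a::field) rep" where
  "zero_rep = (\<lambda>_. 0, \<lambda>_ _. 0\<^sub>m 0 0)"

definition dsum :: "('p,'a::field) rep \<Rightarrow> ('p,'a) rep \<Rightarrow> ('p,'a) rep" where
  "dsum M N = (\<lambda>x. fst M x + fst N x,
     \<lambda>x y. four_block_mat (snd M x y) (0\<^sub>m (fst M y) (fst N x))
                          (0\<^sub>m (fst N y) (fst M x)) (snd N x y))"

fun rep_pow :: "('p,'a::field) rep \<Rightarrow> nat \<Rightarrow> ('p,'a) rep" where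
  "rep_pow M 0 = zero_rep"
| "rep_pow M (Suc m) = dsum M (rep_pow M m)"

definition pull :: "('q \<Rightarrow> 'p) \<Rightarrow> ('p,'a::field) rep \<Rightarrow> ('q,'a) rep" where
  "pull F M = (\<lambda>x. fst M (F x), \<lambda>x y. snd M (F x) (F y))"

text \<open>Split Grothendieck group = group completion of the monoid of iso classes under direct sum.\<close>
definition is_grel :: "'p set \<Rightarrow> ('p \<Rightarrow> 'p \<Rightarrow> bool) \<Rightarrow> ('p,'a::field) grel \<Rightarrow> bool" where
  "is_grel P ord x \<longleftrightarrow> is_rep P ord (fst x) \<and> is_rep P ord (snd x)"

definition gr_eq :: "'p set \<Rightarrow> ('p \<Rightarrow> 'p \<Rightarrow> bool) \<Rightarrow> ('p,'a::field) grel \<Rightarrow> ('p,'a) grel \<Rightarrow> bool" where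
  "gr_eq P ord x y \<longleftrightarrow> (\<exists>X. is_rep P ord X \<and>
      rep_iso P ord (dsum (dsum (fst x) (snd y)) X) (dsum (dsum (fst y) (snd x)) X))"

definition gr_of :: "('p,'a::field) rep \<Rightarrow> ('p,'a) grel" where
  "gr_of M = (M, zero_rep)"

definition gr_add :: "('p,'a::field) grel \<Rightarrow> ('p,'a) grel \<Rightarrow> ('p,'a) grel" where
  "gr_add x y = (dsum (fst x) (fst y), dsum (snd x) (snd y))"

definition gr_smul :: "int \<Rightarrow> ('p,'a::field) grel \<Rightarrow> ('p,'a) grel" where
  "gr_smul a x = (if a \<ge> 0 then (rep_pow (fst x) (nat a), rep_pow (snd x) (nat a))
                  else (rep_pow (snd x) (nat (-a)), rep_pow (fst x) (nat (-a))))"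

definition gr_pull :: "('q \<Rightarrow> 'p) \<Rightarrow> ('p,'a::field) grel \<Rightarrow> ('q,'a) grel" where
  "gr_pull F x = (pull F (fst x), pull F (snd x))"

definition poset_n :: "nat \<Rightarrow> nat set" where "poset_n n = {0..n}"

definition rel1 :: "nat \<Rightarrow> (nat \<times> nat) set" where
  "rel1 n = {(i,j). i < j \<and> j \<le> n}"

definition E_le :: "nat \<times> nat \<Rightarrow> nat \<times> nat \<Rightarrow> bool" where
  "E_le p q \<longleftrightarrow> fst p \<le> fst q \<and> snd p \<le> snd q"

definition G_le :: "nat \<times> nat \<Rightarrow> nat \<times> nat \<Rightarrow> bool" where
  "G_le p q \<longleftrightarrow> p = q \<or> snd p \<le> fst q"

definition d0 :: "nat \<times> nat \<Rightarrow> nat" where "d0 p = snd p"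
definition d1 :: "nat \<times> nat \<Rightarrow> nat" where "d1 p = fst p"

definition Gr_eq_n :: "nat \<Rightarrow> (nat,'a::field) grel \<Rightarrow> (nat,'a) grel \<Rightarrow> bool" where
  "Gr_eq_n n = gr_eq (poset_n n) (\<le>)"

definition E0 :: "nat \<Rightarrow> (nat,'a::field) grel set" where
  "E0 n = {x. is_grel (poset_n n) (\<le>) x \<and> gr_eq (rel1 n) E_le (gr_pull d0 x) (gr_pull d1 x)}"

definition G0 :: "nat \<Rightarrow> (nat,'a::field) grel set" where
  "G0 n = {x. is_grel (poset_n n) (\<le>) x \<and> gr_eq (rel1 n) G_le (gr_pull d0 x) (gr_pull d1 x)}"

definition J :: "nat \<Rightarrow> nat \<Rightarrow> (nat,'a::field) rep" where
  "J a b = (\<lambda>i. if a \<le> i \<and> i \<le> b then 1 else 0,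
            \<lambda>i j. if a \<le> i \<and> i \<le> j \<and> j \<le> b then 1\<^sub>m 1
                  else 0\<^sub>m (if a \<le> j \<and> j \<le> b then 1 else 0) (if a \<le> i \<and> i \<le> b then 1 else 0))"

definition S_rep :: "(nat,'a::field) rep" where
  "S_rep = (\<lambda>_. 1, \<lambda>i j. if i = j then 1\<^sub>m 1 else 0\<^sub>m 1 1)"

definition T_el :: "nat \<Rightarrow> (nat,'a::field) grel" where
  "T_el n = gr_add (gr_add (gr_of (J 0 (n - 1))) (gr_of (J 1 n))) (gr_smul (-1) (gr_of (J 1 (n - 1))))"

end

theory Submission
  imports Defs "HOL-Combinatorics.List_Permutation" "Jordan_Normal_Form.Gauss_Jordan_Elimination" "Jordan_Normal_Form.Determinant"
begin


lemma mult_entry: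
  assumes "A \<in> carrier_mat m k" "B \<in> carrier_mat k n" "i < m" "j < n"
  shows "(A * B) $$ (i,j) = (\<Sum>l<k. A $$ (i,l) * B $$ (l,j))"
  using assms by (auto simp: scalar_prod_def intro!: sum.cong)

lemma assoc_dims:
  assumes h1: "dim_col A = dim_row B" and h2: "dim_col B = dim_row C"
  shows "A * B * C = A * (B * C)"
proof -
  have a: "A \<in> carrier_mat (dim_row A) (dim_col A)" by (rule carrier_mat_triv)
  have b: "B \<in> carrier_mat (dim_col A) (dim_col B)" unfolding carrier_mat_def using h1 by simp
  have c: "C \<in> carrier_mat (dim_col B) (dim_col C)" unfolding carrier_mat_def using h2 by simp
  show ?thesis by (rule assoc_mult_mat[OF a b c])
qed

lemma sum_delta_mult: "(a::nat) < s \<Longrightarrow> (\<Sum>l<s. (if a = l then (1::'a::semiring_1) else 0) * f l) = f a"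
  by (simp add: if_distrib[of "\<lambda>x. x * _"] cong: if_cong)

lemma one_factor_le:
  fixes E :: "'a::field mat"
  assumes E: "E \<in> carrier_mat r c" and F: "F \<in> carrier_mat c r" and EF: "E * F = 1\<^sub>m r"
  shows "r \<le> c"
proof (rule ccontr)
  assume "\<not> r \<le> c" hence cr: "c < r" by simp
  define E' where "E' = mat r r (\<lambda>(i,j). if j < c then E $$ (i,j) else (0::'a))"
  define F' where "F' = mat r r (\<lambda>(i,j). if i < c then F $$ (i,j) else (0::'a))"
  have E'c: "E' \<in> carrier_mat r r" and F'c: "F' \<in> carrier_mat r r" by (auto simp: E'_def F'_def)
  have "E' * F' = 1\<^sub>m r"
  proof (rule eq_matI)
    fix i j assume i: "i < dim_row (1\<^sub>m r :: 'a mat)" and j: "j < dim_col (1\<^sub>m r :: 'a mat)"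
    hence i: "i < r" and j: "j < r" by auto
    have "(E' * F') $$ (i,j) = (\<Sum>l<r. E' $$ (i,l) * F' $$ (l,j))"
      by (rule mult_entry[OF E'c F'c i j])
    also have "\<dots> = (\<Sum>l<r. if l < c then E $$ (i,l) * F $$ (l,j) else 0)"
      using i j by (intro sum.cong, auto simp: E'_def F'_def)
    also have "\<dots> = (\<Sum>l\<in>{..<r} \<inter> {l. l < c}. E $$ (i,l) * F $$ (l,j))"
      by (simp add: sum.inter_restrict)
    also have "{..<r} \<inter> {l. l < c} = {..<c}" using cr by auto
    also have "(\<Sum>l<c. E $$ (i,l) * F $$ (l,j)) = (E * F) $$ (i,j)"
      using cr i j by (subst mult_entry[OF E F], auto)
    finally show "(E' * F') $$ (i,j) = 1\<^sub>m r $$ (i,j)" using EF by simp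
  qed (auto simp: E'_def F'_def)
  hence "det (E' * F') = 1" by simp
  hence d1: "det E' * det F' = 1" using det_mult[OF E'c F'c] by simp
  have "det E' = 0"
  proof -
    let ?v = "unit_vec r (r - 1) :: 'a vec"
    have "?v \<in> carrier_vec r" by simp
    moreover have "?v \<noteq> 0\<^sub>v r"
    proof
      assume "?v = 0\<^sub>v r"
      hence "?v $ (r - 1) = 0\<^sub>v r $ (r-1)" by simp
      thus False using cr by simp
    qed
    moreover have "E' *\<^sub>v ?v = 0\<^sub>v r"
    proof (rule eq_vecI)
      fix i assume "i < dim_vec (0\<^sub>v r :: 'a vec)"
      hence i: "i < r" by simp
      have "(E' *\<^sub>v ?v) $ i = row E' i \<bullet> ?v" using i E'c by simp
      also have "\<dots> = E' $$ (i, r - 1)"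
        using i E'c cr by (subst scalar_prod_right_unit, auto)
      also have "\<dots> = 0" using i cr by (simp add: E'_def)
      finally show "(E' *\<^sub>v ?v) $ i = 0\<^sub>v r $ i" using i by simp
    qed (simp add: E'_def)
    ultimately show ?thesis using det_0_iff_vec_prod_zero_field[OF E'c] by blast
  qed
  with d1 show False by simp
qed


definition mrank :: "'a::field mat \<Rightarrow> nat" where
  "mrank A = Max {r. \<exists>X Y. X \<in> carrier_mat r (dim_row A) \<and> Y \<in> carrier_mat (dim_col A) r \<and> X * A * Y = 1\<^sub>m r}"

lemma factor_bound:
  fixes A :: "'a::field mat"
  assumes "A = E * F" "E \<in> carrier_mat d c" "F \<in> carrier_mat c s"
    "X \<in> carrier_mat r d" "Y \<in> carrier_mat s r" "X * A * Y = 1\<^sub>m r"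
  shows "r \<le> c"
proof -
  have "X * A * Y = (X * E) * (F * Y)" using assms(1) carrier_matD[OF assms(2)] carrier_matD[OF assms(3)]
      carrier_matD[OF assms(4)] carrier_matD[OF assms(5)] by (simp add: assoc_dims del: assoc_mult_mat)
  hence "(X * E) * (F * Y) = 1\<^sub>m r" using assms(6) by simp
  moreover have "X * E \<in> carrier_mat r c" using assms(4,2) by (rule mult_carrier_mat)
  moreover have "F * Y \<in> carrier_mat c r" using assms(3,5) by (rule mult_carrier_mat)
  ultimately show ?thesis by (intro one_factor_le[of "X * E" r c "F * Y"])
qed

lemma mrank_set:
  fixes A :: "'a::field mat"
  assumes A: "A \<in> carrier_mat d s"
  shows "finite {r. \<exists>X Y. X \<in> carrier_mat r (dim_row A) \<and> Y \<in> carrier_mat (dim_col A) r \<and> X * A * Y = 1\<^sub>m r}"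
    and "0 \<in> {r. \<exists>X Y. X \<in> carrier_mat r (dim_row A) \<and> Y \<in> carrier_mat (dim_col A) r \<and> X * A * Y = 1\<^sub>m r}"
proof -
  have "{r. \<exists>X Y. X \<in> carrier_mat r (dim_row A) \<and> Y \<in> carrier_mat (dim_col A) r \<and> X * A * Y = 1\<^sub>m r} \<subseteq> {..s}"
  proof
    fix r assume "r \<in> {r. \<exists>X Y. X \<in> carrier_mat r (dim_row A) \<and> Y \<in> carrier_mat (dim_col A) r \<and> X * A * Y = 1\<^sub>m r}"
    then obtain X Y where "X \<in> carrier_mat r d" "Y \<in> carrier_mat s r" "X * A * Y = 1\<^sub>m r" using A by auto
    moreover have "A = A * 1\<^sub>m s" using A by simp
    ultimately have "r \<le> s" using A by (intro factor_bound[of A A "1\<^sub>m s" d s s X r Y]) auto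
    thus "r \<in> {..s}" by simp
  qed
  thus "finite {r. \<exists>X Y. X \<in> carrier_mat r (dim_row A) \<and> Y \<in> carrier_mat (dim_col A) r \<and> X * A * Y = 1\<^sub>m r}"
    using finite_subset by blast
  show "0 \<in> {r. \<exists>X Y. X \<in> carrier_mat r (dim_row A) \<and> Y \<in> carrier_mat (dim_col A) r \<and> X * A * Y = 1\<^sub>m r}"
    using A by (intro CollectI exI[of _ "0\<^sub>m 0 d"] exI[of _ "0\<^sub>m s 0"]) (auto intro!: eq_matI)
qed

lemma mrank_le:
  fixes A :: "'a::field mat"
  assumes "A = E * F" "E \<in> carrier_mat d c" "F \<in> carrier_mat c s"
  shows "mrank A \<le> c"
proof -
  have A: "A \<in> carrier_mat d s" using assms by auto
  show ?thesis unfolding mrank_def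
  proof (rule Max.boundedI[OF mrank_set(1)[OF A]])
    show "{r. \<exists>X Y. X \<in> carrier_mat r (dim_row A) \<and> Y \<in> carrier_mat (dim_col A) r \<and> X * A * Y = 1\<^sub>m r} \<noteq> {}"
      using mrank_set(2)[OF A] by blast
  next
    fix r assume "r \<in> {r. \<exists>X Y. X \<in> carrier_mat r (dim_row A) \<and> Y \<in> carrier_mat (dim_col A) r \<and> X * A * Y = 1\<^sub>m r}"
    then obtain X Y where "X \<in> carrier_mat r d" "Y \<in> carrier_mat s r" "X * A * Y = 1\<^sub>m r" using A by auto
    thus "r \<le> c" using assms by (intro factor_bound[of A E F d c s X r Y]) auto
  qed
qed

lemma mrank_ge:
  fixes A :: "'a::field mat"
  assumes A: "A \<in> carrier_mat d s" and "X \<in> carrier_mat r d" "Y \<in> carrier_mat s r" "X * A * Y = 1\<^sub>m r"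
  shows "r \<le> mrank A"
  unfolding mrank_def apply (rule Max_ge[OF mrank_set(1)[OF A]]) using assms by (intro CollectI exI[of _ X] exI[of _ Y]) auto

lemma mrank_ex:
  fixes A :: "'a::field mat"
  assumes A: "A \<in> carrier_mat d s"
  shows "\<exists>X Y. X \<in> carrier_mat (mrank A) d \<and> Y \<in> carrier_mat s (mrank A) \<and> X * A * Y = 1\<^sub>m (mrank A)"
proof -
  have "mrank A \<in> {r. \<exists>X Y. X \<in> carrier_mat r (dim_row A) \<and> Y \<in> carrier_mat (dim_col A) r \<and> X * A * Y = 1\<^sub>m r}"
    unfolding mrank_def using mrank_set[OF A] by (intro Max_in) auto
  thus ?thesis using A by auto
qed

lemma mrank_mono:
  fixes A :: "'a::field mat"
  assumes A: "A \<in> carrier_mat d s" and G: "G \<in> carrier_mat d' d" and Gi: "Gi \<in> carrier_mat d d'"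
    and GiG: "Gi * G = 1\<^sub>m d" and U: "U \<in> carrier_mat s s'" and Ui: "Ui \<in> carrier_mat s' s"
    and UUi: "U * Ui = 1\<^sub>m s"
  shows "mrank A \<le> mrank (G * A * U)"
proof -
  obtain X Y where X: "X \<in> carrier_mat (mrank A) d" and Y: "Y \<in> carrier_mat s (mrank A)"
    and XY: "X * A * Y = 1\<^sub>m (mrank A)" using mrank_ex[OF A] by blast
  let ?r = "mrank A"
  have "(X * Gi) * (G * A * U) * (Ui * Y) = X * (Gi * G) * A * (U * Ui) * Y"
  proof -
    have "(X * Gi) * (G * A * U) * (Ui * Y) = X * (Gi * (G * (A * (U * (Ui * Y)))))"
      using carrier_matD[OF X] carrier_matD[OF Y] carrier_matD[OF A] carrier_matD[OF G] carrier_matD[OF Gi]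
       carrier_matD[OF U] carrier_matD[OF Ui] by (simp add: assoc_dims del: assoc_mult_mat)
    also have "\<dots> = X * (Gi * G) * A * (U * Ui) * Y"
      using carrier_matD[OF X] carrier_matD[OF Y] carrier_matD[OF A] carrier_matD[OF G] carrier_matD[OF Gi]
       carrier_matD[OF U] carrier_matD[OF Ui] by (simp add: assoc_dims del: assoc_mult_mat)
    finally show ?thesis .
  qed
  also have "\<dots> = 1\<^sub>m ?r" using GiG UUi XY X Y A by simp
  finally have "(X * Gi) * (G * A * U) * (Ui * Y) = 1\<^sub>m ?r" .
  thus ?thesis using X Y A G Gi U Ui by (intro mrank_ge[of _ d' s']) auto
qed

lemma mrank_inv:
  fixes A :: "'a::field mat"
  assumes A: "A \<in> carrier_mat d s" and G: "G \<in> carrier_mat d' d" and Gi: "Gi \<in> carrier_mat d d'"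
    and GiG: "Gi * G = 1\<^sub>m d" and GGi: "G * Gi = 1\<^sub>m d'" and U: "U \<in> carrier_mat s s'" and Ui: "Ui \<in> carrier_mat s' s"
    and UUi: "U * Ui = 1\<^sub>m s" and UiU: "Ui * U = 1\<^sub>m s'"
  shows "mrank (G * A * U) = mrank A"
proof (rule antisym)
  show "mrank A \<le> mrank (G * A * U)" by (rule mrank_mono[OF A G Gi GiG U Ui UUi])
  have "Gi * (G * A * U) * Ui = (Gi * G) * A * (U * Ui)"
    using carrier_matD[OF A] carrier_matD[OF G] carrier_matD[OF Gi]
       carrier_matD[OF U] carrier_matD[OF Ui] by (simp add: assoc_dims del: assoc_mult_mat)
  also have "\<dots> = A" using GiG UUi A by simp
  finally have e: "Gi * (G * A * U) * Ui = A" .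
  have "mrank (G * A * U) \<le> mrank (Gi * (G * A * U) * Ui)"
    using A G Gi U Ui GGi UiU by (intro mrank_mono[of _ d' s']) auto
  thus "mrank (G * A * U) \<le> mrank A" using e by simp
qed

definition canon :: "nat \<Rightarrow> nat \<Rightarrow> nat list \<Rightarrow> 'a::field mat" where
  "canon d s zs = mat d s (\<lambda>(i,q). if i < length zs \<and> zs ! i = q then 1 else 0)"

lemma canon_carrier[simp]: "canon d s zs \<in> carrier_mat d s" "dim_row (canon d s zs) = d" "dim_col (canon d s zs) = s"
  by (auto simp: canon_def)

lemma canon_factor:
  assumes "length zs \<le> d"
  shows "(canon d s zs :: 'a::field mat) = mat d (length zs) (\<lambda>(i,k). if i = k then 1 else 0) * mat (length zs) s (\<lambda>(k,q). if zs ! k = q then 1 else 0)"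
proof (rule eq_matI)
  fix i j assume "i < dim_row (mat d (length zs) (\<lambda>(i,k). if i = k then 1 else 0) * mat (length zs) s (\<lambda>(k,q). if zs ! k = q then (1::'a) else 0))"
    "j < dim_col (mat d (length zs) (\<lambda>(i,k). if i = k then 1 else 0) * mat (length zs) s (\<lambda>(k,q). if zs ! k = q then (1::'a) else 0))"
  hence i: "i < d" and j: "j < s" by auto
  show "canon d s zs $$ (i, j) = (mat d (length zs) (\<lambda>(i,k). if i = k then 1 else 0) * mat (length zs) s (\<lambda>(k,q). if zs ! k = q then 1 else 0)) $$ (i,j)"
    using i j by (subst mult_entry[of _ d "length zs" _ s], auto simp: canon_def if_distrib[of "\<lambda>x. x * _"] cong: if_cong)
qed (auto simp: canon_def)

lemma mrank_canon:
  assumes d: "distinct zs" and s: "set zs \<subseteq> {..<s}" and l: "length zs \<le> d"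
  shows "mrank (canon d s zs :: 'a::field mat) = length zs"
proof (rule antisym)
  show "mrank (canon d s zs :: 'a mat) \<le> length zs"
    by (rule mrank_le[OF canon_factor[OF l]], auto)
  let ?t = "length zs"
  let ?X = "mat ?t d (\<lambda>(k,i). if k = i then 1 else 0) :: 'a mat"
  let ?Y = "mat s ?t (\<lambda>(q,k). if zs ! k = q then 1 else 0) :: 'a mat"
  let ?F = "mat ?t s (\<lambda>(k,q). if zs ! k = q then 1 else 0) :: 'a mat"
  have cc: "canon d s zs \<in> carrier_mat d s" by (simp add: canon_def)
  have XC: "?X * canon d s zs = ?F"
  proof (rule eq_matI)
    fix k q assume "k < dim_row ?F" "q < dim_col ?F"
    hence k: "k < ?t" and q: "q < s" by auto
    show "(?X * canon d s zs) $$ (k,q) = ?F $$ (k,q)"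
      using k q l by (subst mult_entry[OF _ cc], auto simp: canon_def if_distrib[of "\<lambda>x. x * _"] cong: if_cong)
  qed auto
  have FY: "?F * ?Y = 1\<^sub>m ?t"
  proof (rule eq_matI)
    fix k k' assume "k < dim_row (1\<^sub>m ?t :: 'a mat)" "k' < dim_col (1\<^sub>m ?t :: 'a mat)"
    hence k: "k < ?t" and k': "k' < ?t" by auto
    have zk: "zs ! k < s" using s k nth_mem by blast
    have "(?F * ?Y) $$ (k,k') = (\<Sum>q<s. (if zs ! k = q then 1 else 0) * (if zs ! k' = q then 1 else 0))"
      using k k' by (subst mult_entry[of _ _ s], auto)
    also have "\<dots> = (if zs ! k' = zs ! k then 1 else 0)" using zk by (subst sum_delta_mult) auto
    also have "\<dots> = 1\<^sub>m ?t $$ (k,k')" using k k' d by (simp add: nth_eq_iff_index_eq)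
    finally show "(?F * ?Y) $$ (k,k') = 1\<^sub>m ?t $$ (k,k')" .
  qed auto
  have "?X * canon d s zs * ?Y = 1\<^sub>m ?t" using XC FY by simp
  thus "length zs \<le> mrank (canon d s zs :: 'a mat)"
    by (intro mrank_ge[OF cc, of ?X _ ?Y]) auto
qed



lemma sum_delta_mult_gen: "(\<Sum>l<s. (if (a::nat) = l then (1::'a::semiring_1) else 0) * f l) = (if a < s then f a else 0)"
  by (simp add: if_distrib[of "\<lambda>x. x * _"] cong: if_cong)

lemma sum_delta_mult_right: "(\<Sum>l<s. f l * (if l = (a::nat) then (1::'a::semiring_1) else 0)) = (if a < s then f a else 0)"
  by (simp add: if_distrib[of "\<lambda>x. _ * x"] cong: if_cong)

lemma reduction:
  fixes A :: "'a::field mat"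
  assumes A: "A \<in> carrier_mat d s"
  shows "\<exists>G Gi U Ui zs. G \<in> carrier_mat d d \<and> Gi \<in> carrier_mat d d \<and> G * Gi = 1\<^sub>m d \<and> Gi * G = 1\<^sub>m d \<and>
     U \<in> carrier_mat s s \<and> Ui \<in> carrier_mat s s \<and> U * Ui = 1\<^sub>m s \<and> Ui * U = 1\<^sub>m s \<and>
     (\<forall>i j. j < i \<longrightarrow> i < s \<longrightarrow> U $$ (i,j) = 0 \<and> Ui $$ (i,j) = 0) \<and>
     sorted_wrt (<) zs \<and> set zs \<subseteq> {..<s} \<and> length zs \<le> d \<and> G * A * U = canon d s zs"
proof -
  define C where "C = gauss_jordan_single A"
  note gj = gauss_jordan_single[OF A C_def[symmetric]]
  have Cc: "C \<in> carrier_mat d s" using gj(2) .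
  from gj(4) obtain P Q where CPA: "C = P * A" and Pc: "P \<in> carrier_mat d d" and Qc: "Q \<in> carrier_mat d d"
    and PQ: "P * Q = 1\<^sub>m d" and QP: "Q * P = 1\<^sub>m d" by blast
  from gj(3) obtain f where pf: "pivot_fun C f s" unfolding row_echelon_form_def using Cc by auto
  have dr: "dim_row C = d" using Cc by simp
  note pv = pivot_funD[OF dr pf]
  define t where "t = length (takeWhile (\<lambda>i. f i < s) [0..<d])"
  have td: "t \<le> d" unfolding t_def using length_takeWhile_le[of _ "[0..<d]"] by simp
  have lt1: "f i < s" if "i < t" for i
  proof -
    have "takeWhile (\<lambda>i. f i < s) [0..<d] ! i \<in> set (takeWhile (\<lambda>i. f i < s) [0..<d])"
      using that unfolding t_def by (rule nth_mem)
    moreover have "takeWhile (\<lambda>i. f i < s) [0..<d] ! i = i" using that td unfolding t_def by (simp add: takeWhile_nth)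
    ultimately show ?thesis by (auto dest: set_takeWhileD)
  qed
  have ft: "f t = s" if "t < d"
  proof -
    have "\<not> f ([0..<d] ! t) < s" unfolding t_def by (rule nth_length_takeWhile) (use that in \<open>simp add: t_def\<close>)
    hence "\<not> f t < s" using that by simp
    thus ?thesis using pv(1)[OF that] by simp
  qed
  have fs: "f i = s" if "t \<le> i" "i < d" for i
    using that
  proof (induct i)
    case 0 thus ?case using ft by simp
  next
    case (Suc n)
    show ?case
    proof (cases "t \<le> n")
      case True
      hence "f n = s" using Suc by simp
      thus ?thesis using pv(3)[of n] pv(1)[of "Suc n"] Suc by auto
    next
      case False
      hence "t = Suc n" using Suc by simp
      thus ?thesis using ft Suc by simp
    qed
  qed
  have mono: "f i < f j" if "i < j" "j < t" for i j
    using that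
  proof (induct j)
    case 0 thus ?case by simp
  next
    case (Suc j)
    have "f j < f (Suc j)" using pv(3)[of j] lt1[of "Suc j"] Suc td by auto
    thus ?case using Suc by (cases "i = j") auto
  qed
  have inj: "i = j" if "i < t" "j < t" "f i = f j" for i j
    using mono[of i j] mono[of j i] that by (cases i j rule: linorder_cases) auto
  define zs where "zs = map f [0..<t]"
  have zs_sorted: "sorted_wrt (<) zs" unfolding zs_def sorted_wrt_map
    by (rule sorted_wrt_mono_rel[OF _ sorted_wrt_upt]) (auto intro: mono)
  have zs_set: "set zs = f ` {..<t}" unfolding zs_def by auto
  have zs_sub: "set zs \<subseteq> {..<s}" unfolding zs_set using lt1 by auto
  have zs_len: "length zs = t" unfolding zs_def by simp
  have zs_nth: "zs ! i = f i" if "i < t" for i unfolding zs_def using that by simp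
  have zero_row: "C $$ (i,j) = 0" if "t \<le> i" "i < d" "j < s" for i j using pv(2)[of i j] fs[of i] that by auto
  have pcol: "C $$ (i, f r) = (if i = r then 1 else 0)" if "r < t" "i < d" for i r
    using pv(4)[of r] pv(5)[of r i] lt1[of r] td that by auto
  have left0: "C $$ (r,j) = 0" if "r < t" "j < f r" for r j using pv(2)[of r j] td that by auto
  define g where "g p = (THE r. r < t \<and> f r = p)" for p
  have g: "g (f r) = r" if "r < t" for r using inj that unfolding g_def by (intro the_equality) auto
  define nf where "nf p q = (if p \<in> set zs \<and> q \<notin> set zs then C $$ (g p, q) else 0)" for p q
  define U where "U = mat s s (\<lambda>(p,q). (if p = q then 1 else 0) - nf p q)"
  define Ui where "Ui = mat s s (\<lambda>(p,q). (if p = q then 1 else 0) + nf p q)"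
  have Uc: "U \<in> carrier_mat s s" and Uic: "Ui \<in> carrier_mat s s" by (auto simp: U_def Ui_def)
  have nf_tri: "nf p q = 0" if "q < p" for p q
  proof (cases "p \<in> set zs \<and> q \<notin> set zs")
    case True
    then obtain r where r: "r < t" "p = f r" using zs_set by auto
    thus ?thesis using True left0[of r q] g[of r] that by (simp add: nf_def)
  qed (auto simp: nf_def)
  have nfnf: "nf p k * nf k q = 0" for p k q by (simp add: nf_def)
  have UUi: "U * Ui = 1\<^sub>m s"
  proof (rule eq_matI)
    fix p q assume "p < dim_row (1\<^sub>m s :: 'a mat)" "q < dim_col (1\<^sub>m s :: 'a mat)"
    hence p: "p < s" and q: "q < s" by auto
    have "(U * Ui) $$ (p,q) = (\<Sum>k<s. ((if p = k then 1 else 0) - nf p k) * ((if k = q then 1 else 0) + nf k q))"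
      using p q by (subst mult_entry[OF Uc Uic], auto simp: U_def Ui_def)
    also have "\<dots> = (\<Sum>k<s. (if p = k then 1 else 0) * ((if k = q then 1 else 0) + nf k q))
       - (\<Sum>k<s. nf p k * (if k = q then 1 else 0)) - (\<Sum>k<s. nf p k * nf k q)"
      by (simp add: sum_subtractf[symmetric] algebra_simps)
    also have "\<dots> = ((if p = q then 1 else 0) + nf p q) - nf p q - 0"
      using p q by (simp only: sum_delta_mult_gen sum_delta_mult_right nfnf sum.neutral_const) simp
    finally show "(U * Ui) $$ (p,q) = 1\<^sub>m s $$ (p,q)" using p q by simp
  qed (auto simp: U_def Ui_def)
  have UiU: "Ui * U = 1\<^sub>m s"
  proof (rule eq_matI)
    fix p q assume "p < dim_row (1\<^sub>m s :: 'a mat)" "q < dim_col (1\<^sub>m s :: 'a mat)"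
    hence p: "p < s" and q: "q < s" by auto
    have "(Ui * U) $$ (p,q) = (\<Sum>k<s. ((if p = k then 1 else 0) + nf p k) * ((if k = q then 1 else 0) - nf k q))"
      using p q by (subst mult_entry[OF Uic Uc], auto simp: U_def Ui_def)
    also have "\<dots> = (\<Sum>k<s. (if p = k then 1 else 0) * ((if k = q then 1 else 0) - nf k q))
       + (\<Sum>k<s. nf p k * (if k = q then 1 else 0)) - (\<Sum>k<s. nf p k * nf k q)"
      by (simp add: sum_subtractf[symmetric] sum.distrib[symmetric] algebra_simps)
    also have "\<dots> = ((if p = q then 1 else 0) - nf p q) + nf p q - 0"
      using p q by (simp only: sum_delta_mult_gen sum_delta_mult_right nfnf sum.neutral_const) simp
    finally show "(Ui * U) $$ (p,q) = 1\<^sub>m s $$ (p,q)" using p q by simp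
  qed (auto simp: U_def Ui_def)
  have tri: "\<forall>i j. j < i \<longrightarrow> i < s \<longrightarrow> U $$ (i,j) = 0 \<and> Ui $$ (i,j) = 0"
    using nf_tri by (auto simp: U_def Ui_def)
  have CN: "(\<Sum>k<s. C $$ (i,k) * nf k q) = (if q \<in> set zs then 0 else C $$ (i,q))" if i: "i < d" and q: "q < s" for i q
  proof (cases "q \<in> set zs")
    case True thus ?thesis by (simp add: nf_def)
  next
    case False
    have "(\<Sum>k<s. C $$ (i,k) * nf k q) = (\<Sum>k\<in>{..<s} \<inter> set zs. C $$ (i,k) * C $$ (g k, q))"
      using False by (simp add: nf_def sum.inter_restrict if_distrib[of "\<lambda>x. _ * x"] cong: if_cong)
    also have "{..<s} \<inter> set zs = f ` {..<t}" using zs_sub zs_set by auto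
    also have "(\<Sum>k\<in>f ` {..<t}. C $$ (i,k) * C $$ (g k, q)) = (\<Sum>r<t. C $$ (i, f r) * C $$ (g (f r), q))"
      using inj by (subst sum.reindex) (auto intro!: inj_onI)
    also have "\<dots> = (\<Sum>r<t. (if i = r then 1 else 0) * C $$ (r, q))"
      using i by (intro sum.cong) (auto simp: pcol g)
    also have "\<dots> = (if i < t then C $$ (i,q) else 0)" by (rule sum_delta_mult_gen)
    also have "\<dots> = C $$ (i,q)" using zero_row[of i q] i q by auto
    finally show ?thesis using False by simp
  qed
  have CU: "C * U = canon d s zs"
  proof (rule eq_matI)
    fix i q assume "i < dim_row (canon d s zs :: 'a mat)" "q < dim_col (canon d s zs :: 'a mat)"
    hence i: "i < d" and q: "q < s" by auto
    have "(C * U) $$ (i,q) = (\<Sum>k<s. C $$ (i,k) * ((if k = q then 1 else 0) - nf k q))"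
      using i q by (subst mult_entry[OF Cc Uc], auto simp: U_def)
    also have "\<dots> = (\<Sum>k<s. C $$ (i,k) * (if k = q then 1 else 0)) - (\<Sum>k<s. C $$ (i,k) * nf k q)"
      by (simp add: sum_subtractf[symmetric] algebra_simps)
    also have "\<dots> = (if q \<in> set zs then C $$ (i,q) else 0)"
      using i q by (simp only: sum_delta_mult_right CN) simp
    also have "\<dots> = canon d s zs $$ (i,q)"
    proof (cases "q \<in> set zs")
      case True
      then obtain r where r: "r < t" "q = f r" using zs_set by auto
      have "(i < length zs \<and> zs ! i = q) = (i = r)"
        using r inj[of i r] zs_nth[of i] zs_len by auto
      thus ?thesis using True r i q pcol[of r i] by (simp add: canon_def)
    next
      case False
      have "\<not> (i < length zs \<and> zs ! i = q)" using False nth_mem[of i zs] by auto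
      thus ?thesis using False i q by (simp add: canon_def)
    qed
    finally show "(C * U) $$ (i,q) = canon d s zs $$ (i,q)" .
  qed (use Cc Uc in auto)
  have "P * A * U = canon d s zs" using CU CPA by simp
  thus ?thesis using Pc Qc PQ QP Uc Uic UUi UiU tri zs_sorted zs_sub zs_len td
    by (intro exI[of _ P] exI[of _ Q] exI[of _ U] exI[of _ Ui] exI[of _ zs]) auto
qed



lemma mrank_factor:
  fixes A :: "'a::field mat"
  assumes A: "A \<in> carrier_mat d s"
  shows "\<exists>E F. E \<in> carrier_mat d (mrank A) \<and> F \<in> carrier_mat (mrank A) s \<and> A = E * F"
proof -
  obtain G Gi U Ui zs where G: "G \<in> carrier_mat d d" and Gi: "Gi \<in> carrier_mat d d" and GGi: "G * Gi = 1\<^sub>m d"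
    and GiG: "Gi * G = 1\<^sub>m d" and U: "U \<in> carrier_mat s s" and Ui: "Ui \<in> carrier_mat s s" and UUi: "U * Ui = 1\<^sub>m s"
    and UiU: "Ui * U = 1\<^sub>m s" and zs: "sorted_wrt (<) zs" "set zs \<subseteq> {..<s}" "length zs \<le> d"
    and red: "G * A * U = canon d s zs"
    using reduction[OF A] by blast
  have dz: "distinct zs" using zs(1) by (simp add: strict_sorted_iff)
  have mr: "mrank A = length zs" using mrank_inv[OF A G Gi GiG GGi U Ui UUi UiU] red mrank_canon[OF dz zs(2,3)] by metis
  define E0 where "E0 = (mat d (length zs) (\<lambda>(i,k). if i = k then 1 else 0) :: 'a mat)"
  define F0 where "F0 = (mat (length zs) s (\<lambda>(k,q). if zs ! k = q then 1 else 0) :: 'a mat)"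
  have cf: "canon d s zs = E0 * F0" unfolding E0_def F0_def by (rule canon_factor[OF zs(3)])
  have E0c: "E0 \<in> carrier_mat d (length zs)" and F0c: "F0 \<in> carrier_mat (length zs) s" by (auto simp: E0_def F0_def)
  have "A = Gi * (G * A * U) * Ui"
  proof -
    have "Gi * (G * A * U) * Ui = (Gi * G) * A * (U * Ui)"
      using carrier_matD[OF A] carrier_matD[OF G] carrier_matD[OF Gi]
       carrier_matD[OF U] carrier_matD[OF Ui] by (simp add: assoc_dims del: assoc_mult_mat)
    thus ?thesis using GiG UUi A by simp
  qed
  also have "\<dots> = (Gi * E0) * (F0 * Ui)" unfolding red cf
      using carrier_matD[OF E0c] carrier_matD[OF F0c] carrier_matD[OF Gi] carrier_matD[OF Ui]
      by (simp add: assoc_dims del: assoc_mult_mat)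
  finally show ?thesis using mr Gi E0c F0c Ui by (intro exI[of _ "Gi * E0"] exI[of _ "F0 * Ui"]) auto
qed

lemma mrank_diag:
  fixes A B :: "'a::field mat"
  assumes A: "A \<in> carrier_mat a1 a2" and B: "B \<in> carrier_mat b1 b2"
  shows "mrank (four_block_mat A (0\<^sub>m a1 b2) (0\<^sub>m b1 a2) B) = mrank A + mrank B"
proof (rule antisym)
  obtain EA FA where EA: "EA \<in> carrier_mat a1 (mrank A)" and FA: "FA \<in> carrier_mat (mrank A) a2" and eA: "A = EA * FA"
    using mrank_factor[OF A] by blast
  obtain EB FB where EB: "EB \<in> carrier_mat b1 (mrank B)" and FB: "FB \<in> carrier_mat (mrank B) b2" and eB: "B = EB * FB"
    using mrank_factor[OF B] by blast
  have "four_block_mat A (0\<^sub>m a1 b2) (0\<^sub>m b1 a2) B =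
    four_block_mat EA (0\<^sub>m a1 (mrank B)) (0\<^sub>m b1 (mrank A)) EB * four_block_mat FA (0\<^sub>m (mrank A) b2) (0\<^sub>m (mrank B) a2) FB"
    by (subst mult_four_block_mat[of _ a1 "mrank A" _ "mrank B" _ b1 _ _ a2 _ b2]) (use EA FA EB FB eA eB in auto)
  thus "mrank (four_block_mat A (0\<^sub>m a1 b2) (0\<^sub>m b1 a2) B) \<le> mrank A + mrank B"
    by (rule mrank_le[of _ _ _ "a1 + b1" _ "a2 + b2"]) (use EA FB EB FA in auto)
next
  obtain XA YA where XA: "XA \<in> carrier_mat (mrank A) a1" and YA: "YA \<in> carrier_mat a2 (mrank A)" and xa: "XA * A * YA = 1\<^sub>m (mrank A)"
    using mrank_ex[OF A] by blast
  obtain XB YB where XB: "XB \<in> carrier_mat (mrank B) b1" and YB: "YB \<in> carrier_mat b2 (mrank B)" and xb: "XB * B * YB = 1\<^sub>m (mrank B)"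
    using mrank_ex[OF B] by blast
  let ?X = "four_block_mat XA (0\<^sub>m (mrank A) b1) (0\<^sub>m (mrank B) a1) XB"
  let ?Y = "four_block_mat YA (0\<^sub>m a2 (mrank B)) (0\<^sub>m b2 (mrank A)) YB"
  let ?D = "four_block_mat A (0\<^sub>m a1 b2) (0\<^sub>m b1 a2) B"
  have "?X * ?D = four_block_mat (XA * A) (0\<^sub>m (mrank A) b2) (0\<^sub>m (mrank B) a2) (XB * B)"
    by (subst mult_four_block_mat[of _ "mrank A" a1 _ b1 _ "mrank B" _ _ a2 _ b2]) (use XA XB A B in auto)
  moreover have "four_block_mat (XA * A) (0\<^sub>m (mrank A) b2) (0\<^sub>m (mrank B) a2) (XB * B) * ?Y = four_block_mat (XA * A * YA) (0\<^sub>m (mrank A) (mrank B)) (0\<^sub>m (mrank B) (mrank A)) (XB * B * YB)"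
    by (subst mult_four_block_mat[of _ "mrank A" a2 _ b2 _ "mrank B" _ _ "mrank A" _ "mrank B"]) (use XA XB A B YA YB in auto)
  ultimately have "?X * ?D * ?Y = four_block_mat (XA * A * YA) (0\<^sub>m (mrank A) (mrank B)) (0\<^sub>m (mrank B) (mrank A)) (XB * B * YB)"
    by simp
  hence "?X * ?D * ?Y = 1\<^sub>m (mrank A + mrank B)" using xa xb by simp
  thus "mrank A + mrank B \<le> mrank ?D"
    by (intro mrank_ge[of _ "a1 + b1" "a2 + b2" ?X _ ?Y]) (use XA XB A B YA YB in auto)
qed

lemma mrank_one: "mrank (1\<^sub>m d :: 'a::field mat) = d"
proof (rule antisym)
  show "mrank (1\<^sub>m d :: 'a mat) \<le> d" by (rule mrank_le[of _ "1\<^sub>m d" "1\<^sub>m d" d d d]) auto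
  show "d \<le> mrank (1\<^sub>m d :: 'a mat)" by (rule mrank_ge[of _ d d "1\<^sub>m d" _ "1\<^sub>m d"]) auto
qed

lemma mrank_zero: "mrank (0\<^sub>m r c :: 'a::field mat) = 0"
proof -
  have "mrank (0\<^sub>m r c :: 'a mat) \<le> 0" by (rule mrank_le[of _ "0\<^sub>m r 0" "0\<^sub>m 0 c" r 0 c]) auto
  thus ?thesis by simp
qed



lemma is_repD:
  assumes "is_rep P ord M" "x \<in> P" "y \<in> P"
  shows "ord x y \<Longrightarrow> snd M x y \<in> carrier_mat (fst M y) (fst M x)"
    and "snd M x x = 1\<^sub>m (fst M x)"
    and "z \<in> P \<Longrightarrow> ord x y \<Longrightarrow> ord y z \<Longrightarrow> snd M x z = snd M y z * snd M x y"
  using assms unfolding is_rep_def by blast+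

lemma is_rep_zero: "is_rep P ord (zero_rep :: ('p,'a::field) rep)"
  unfolding is_rep_def zero_rep_def by (auto intro!: eq_matI)

lemma snd_dsum: "snd (dsum M N) x y = four_block_mat (snd M x y) (0\<^sub>m (fst M y) (fst N x)) (0\<^sub>m (fst N y) (fst M x)) (snd N x y)"
  and fst_dsum: "fst (dsum M N) x = fst M x + fst N x"
  by (simp_all add: dsum_def)

lemma is_rep_dsum:
  assumes M: "is_rep P ord M" and N: "is_rep P ord N"
  shows "is_rep P ord (dsum M N)"
  unfolding is_rep_def
proof (intro conjI ballI impI)
  fix x y assume x: "x \<in> P" and y: "y \<in> P" and o: "ord x y"
  show "snd (dsum M N) x y \<in> carrier_mat (fst (dsum M N) y) (fst (dsum M N) x)"
    unfolding snd_dsum fst_dsum using is_repD(1)[OF M x y o] is_repD(1)[OF N x y o] by simp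
next
  fix x assume x: "x \<in> P"
  show "snd (dsum M N) x x = 1\<^sub>m (fst (dsum M N) x)"
    unfolding snd_dsum fst_dsum using is_repD(2)[OF M x x] is_repD(2)[OF N x x] by simp
next
  fix x y z assume x: "x \<in> P" and y: "y \<in> P" and z: "z \<in> P" and o1: "ord x y" and o2: "ord y z"
  note c = is_repD(1)[OF M x y o1] is_repD(1)[OF N x y o1] is_repD(1)[OF M y z o2] is_repD(1)[OF N y z o2]
  show "snd (dsum M N) x z = snd (dsum M N) y z * snd (dsum M N) x y"
    unfolding snd_dsum
    by (subst mult_four_block_mat[of _ "fst M z" "fst M y" _ "fst N y" _ "fst N z" _ _ "fst M x" _ "fst N x"])
       (use c is_repD(3)[OF M x y z o1 o2] is_repD(3)[OF N x y z o1 o2] in auto)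
qed

lemma is_rep_pow: "is_rep P ord M \<Longrightarrow> is_rep P ord (rep_pow M k)"
  by (induct k) (auto simp: is_rep_zero is_rep_dsum)

lemma is_rep_pull:
  assumes M: "is_rep P ord M" and F: "\<And>x. x \<in> Q \<Longrightarrow> F x \<in> P"
    and mono: "\<And>x y. x \<in> Q \<Longrightarrow> y \<in> Q \<Longrightarrow> ord' x y \<Longrightarrow> ord (F x) (F y)"
  shows "is_rep Q ord' (pull F M)"
  using M F mono unfolding is_rep_def pull_def by simp

lemma is_rep_mono:
  assumes M: "is_rep P ord M" and "Q \<subseteq> P" and "\<And>x y. x \<in> Q \<Longrightarrow> y \<in> Q \<Longrightarrow> ord' x y \<Longrightarrow> ord x y"
  shows "is_rep Q ord' M"
  using assms unfolding is_rep_def by blast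

lemma rep_isoI:
  assumes "\<And>x. x \<in> P \<Longrightarrow> \<phi> x \<in> carrier_mat (fst N x) (fst M x)"
    "\<And>x. x \<in> P \<Longrightarrow> \<psi> x \<in> carrier_mat (fst M x) (fst N x)"
    "\<And>x. x \<in> P \<Longrightarrow> \<phi> x * \<psi> x = 1\<^sub>m (fst N x)"
    "\<And>x. x \<in> P \<Longrightarrow> \<psi> x * \<phi> x = 1\<^sub>m (fst M x)"
    "\<And>x y. x \<in> P \<Longrightarrow> y \<in> P \<Longrightarrow> ord x y \<Longrightarrow> snd N x y * \<phi> x = \<phi> y * snd M x y"
  shows "rep_iso P ord M N"
  unfolding rep_iso_def using assms by (intro exI[of _ \<phi>] exI[of _ \<psi>]) auto

lemma rep_isoE:
  assumes "rep_iso P ord M N"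
  obtains \<phi> \<psi> where "\<And>x. x \<in> P \<Longrightarrow> \<phi> x \<in> carrier_mat (fst N x) (fst M x)"
    "\<And>x. x \<in> P \<Longrightarrow> \<psi> x \<in> carrier_mat (fst M x) (fst N x)"
    "\<And>x. x \<in> P \<Longrightarrow> \<phi> x * \<psi> x = 1\<^sub>m (fst N x)"
    "\<And>x. x \<in> P \<Longrightarrow> \<psi> x * \<phi> x = 1\<^sub>m (fst M x)"
    "\<And>x y. x \<in> P \<Longrightarrow> y \<in> P \<Longrightarrow> ord x y \<Longrightarrow> snd N x y * \<phi> x = \<phi> y * snd M x y"
  using assms unfolding rep_iso_def by blast

lemma rep_iso_mono:
  assumes "rep_iso P ord M N" and "Q \<subseteq> P" and "\<And>x y. x \<in> Q \<Longrightarrow> y \<in> Q \<Longrightarrow> ord' x y \<Longrightarrow> ord x y"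
  shows "rep_iso Q ord' M N"
proof -
  obtain \<phi> \<psi> where p: "\<And>x. x \<in> P \<Longrightarrow> \<phi> x \<in> carrier_mat (fst N x) (fst M x)"
    and q: "\<And>x. x \<in> P \<Longrightarrow> \<psi> x \<in> carrier_mat (fst M x) (fst N x)"
    and pq: "\<And>x. x \<in> P \<Longrightarrow> \<phi> x * \<psi> x = 1\<^sub>m (fst N x)"
    and qp: "\<And>x. x \<in> P \<Longrightarrow> \<psi> x * \<phi> x = 1\<^sub>m (fst M x)"
    and nat: "\<And>x y. x \<in> P \<Longrightarrow> y \<in> P \<Longrightarrow> ord x y \<Longrightarrow> snd N x y * \<phi> x = \<phi> y * snd M x y"
    using rep_isoE[OF assms(1)] by blast
  have Q: "x \<in> Q \<Longrightarrow> x \<in> P" for x using assms(2) by blast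
  show ?thesis
  proof (rule rep_isoI[of _ \<phi> _ _ \<psi>])
    fix x y assume x: "x \<in> Q" and y: "y \<in> Q" and o: "ord' x y"
    show "snd N x y * \<phi> x = \<phi> y * snd M x y" by (rule nat[OF Q[OF x] Q[OF y] assms(3)[OF x y o]])
  qed (use p q pq qp Q in auto)
qed

lemma rep_iso_refl: "is_rep P ord M \<Longrightarrow> rep_iso P ord M M"
  by (rule rep_isoI[of _ "\<lambda>x. 1\<^sub>m (fst M x)" _ _ "\<lambda>x. 1\<^sub>m (fst M x)"]) (auto dest: is_repD(1))

lemma data_eq_iso:
  assumes M: "is_rep P ord M" and f: "\<And>x. x \<in> P \<Longrightarrow> fst M x = fst N x"
    and s: "\<And>x y. x \<in> P \<Longrightarrow> y \<in> P \<Longrightarrow> ord x y \<Longrightarrow> snd M x y = snd N x y"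
  shows "rep_iso P ord M N"
proof (rule rep_isoI[of _ "\<lambda>x. 1\<^sub>m (fst M x)" _ _ "\<lambda>x. 1\<^sub>m (fst M x)"])
  fix x y assume x: "x \<in> P" and y: "y \<in> P" and o: "ord x y"
  have "snd M x y \<in> carrier_mat (fst M y) (fst M x)" by (rule is_repD(1)[OF M x y o])
  thus "snd N x y * 1\<^sub>m (fst M x) = 1\<^sub>m (fst M y) * snd M x y" using s[OF x y o] by simp
qed (use f in auto)

lemma rep_iso_sym:
  assumes iso: "rep_iso P ord M N" and M: "is_rep P ord M" and N: "is_rep P ord N"
  shows "rep_iso P ord N M"
proof -
  obtain \<phi> \<psi> where p: "\<And>x. x \<in> P \<Longrightarrow> \<phi> x \<in> carrier_mat (fst N x) (fst M x)"
    and q: "\<And>x. x \<in> P \<Longrightarrow> \<psi> x \<in> carrier_mat (fst M x) (fst N x)"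
    and pq: "\<And>x. x \<in> P \<Longrightarrow> \<phi> x * \<psi> x = 1\<^sub>m (fst N x)"
    and qp: "\<And>x. x \<in> P \<Longrightarrow> \<psi> x * \<phi> x = 1\<^sub>m (fst M x)"
    and nat: "\<And>x y. x \<in> P \<Longrightarrow> y \<in> P \<Longrightarrow> ord x y \<Longrightarrow> snd N x y * \<phi> x = \<phi> y * snd M x y"
    using rep_isoE[OF iso] by blast
  show ?thesis
  proof (rule rep_isoI[of _ \<psi> _ _ \<phi>])
    fix x y assume x: "x \<in> P" and y: "y \<in> P" and o: "ord x y"
    note c = p[OF x] p[OF y] q[OF x] q[OF y] is_repD(1)[OF M x y o] is_repD(1)[OF N x y o]
    note d = c[THEN carrier_matD(1)] c[THEN carrier_matD(2)]
    have "snd M x y * \<psi> x = (\<psi> y * \<phi> y) * snd M x y * \<psi> x" using qp[OF y] c by simp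
    also have "\<dots> = \<psi> y * (snd N x y * \<phi> x) * \<psi> x" unfolding nat[OF x y o] using d
      by (simp add: assoc_dims del: assoc_mult_mat)
    also have "\<dots> = \<psi> y * snd N x y * (\<phi> x * \<psi> x)" using d by (simp add: assoc_dims del: assoc_mult_mat)
    also have "\<dots> = \<psi> y * snd N x y" using pq[OF x] c by simp
    finally show "snd M x y * \<psi> x = \<psi> y * snd N x y" .
  qed (use p q pq qp in auto)
qed

lemma rep_iso_trans:
  assumes i1: "rep_iso P ord M N" and i2: "rep_iso P ord N K" and M: "is_rep P ord M" and N: "is_rep P ord N"
    and K: "is_rep P ord K"
  shows "rep_iso P ord M K"
proof -
  obtain \<phi> \<psi> where p: "\<And>x. x \<in> P \<Longrightarrow> \<phi> x \<in> carrier_mat (fst N x) (fst M x)"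
    and q: "\<And>x. x \<in> P \<Longrightarrow> \<psi> x \<in> carrier_mat (fst M x) (fst N x)"
    and pq: "\<And>x. x \<in> P \<Longrightarrow> \<phi> x * \<psi> x = 1\<^sub>m (fst N x)"
    and qp: "\<And>x. x \<in> P \<Longrightarrow> \<psi> x * \<phi> x = 1\<^sub>m (fst M x)"
    and nat: "\<And>x y. x \<in> P \<Longrightarrow> y \<in> P \<Longrightarrow> ord x y \<Longrightarrow> snd N x y * \<phi> x = \<phi> y * snd M x y"
    using rep_isoE[OF i1] by blast
  obtain \<phi>' \<psi>' where p': "\<And>x. x \<in> P \<Longrightarrow> \<phi>' x \<in> carrier_mat (fst K x) (fst N x)"
    and q': "\<And>x. x \<in> P \<Longrightarrow> \<psi>' x \<in> carrier_mat (fst N x) (fst K x)"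
    and pq': "\<And>x. x \<in> P \<Longrightarrow> \<phi>' x * \<psi>' x = 1\<^sub>m (fst K x)"
    and qp': "\<And>x. x \<in> P \<Longrightarrow> \<psi>' x * \<phi>' x = 1\<^sub>m (fst N x)"
    and nat': "\<And>x y. x \<in> P \<Longrightarrow> y \<in> P \<Longrightarrow> ord x y \<Longrightarrow> snd K x y * \<phi>' x = \<phi>' y * snd N x y"
    using rep_isoE[OF i2] by blast
  show ?thesis
  proof (rule rep_isoI[of _ "\<lambda>x. \<phi>' x * \<phi> x" _ _ "\<lambda>x. \<psi> x * \<psi>' x"])
    fix x assume x: "x \<in> P"
    note c = p[OF x] q[OF x] p'[OF x] q'[OF x]
    note d = c[THEN carrier_matD(1)] c[THEN carrier_matD(2)]
    have "\<phi>' x * \<phi> x * (\<psi> x * \<psi>' x) = \<phi>' x * (\<phi> x * \<psi> x) * \<psi>' x" using d by (simp add: assoc_dims del: assoc_mult_mat)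
    thus "\<phi>' x * \<phi> x * (\<psi> x * \<psi>' x) = 1\<^sub>m (fst K x)" using pq[OF x] pq'[OF x] c by simp
    have "\<psi> x * \<psi>' x * (\<phi>' x * \<phi> x) = \<psi> x * (\<psi>' x * \<phi>' x) * \<phi> x" using d by (simp add: assoc_dims del: assoc_mult_mat)
    thus "\<psi> x * \<psi>' x * (\<phi>' x * \<phi> x) = 1\<^sub>m (fst M x)" using qp[OF x] qp'[OF x] c by simp
  next
    fix x y assume x: "x \<in> P" and y: "y \<in> P" and o: "ord x y"
    note c = p[OF x] p[OF y] p'[OF x] p'[OF y] is_repD(1)[OF M x y o] is_repD(1)[OF N x y o] is_repD(1)[OF K x y o]
    note d = c[THEN carrier_matD(1)] c[THEN carrier_matD(2)]
    have "snd K x y * (\<phi>' x * \<phi> x) = (snd K x y * \<phi>' x) * \<phi> x" using d by (simp add: assoc_dims del: assoc_mult_mat)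
    also have "\<dots> = \<phi>' y * (snd N x y * \<phi> x)" unfolding nat'[OF x y o] using d by (simp add: assoc_dims del: assoc_mult_mat)
    also have "\<dots> = \<phi>' y * \<phi> y * snd M x y" unfolding nat[OF x y o] using d by (simp add: assoc_dims del: assoc_mult_mat)
    finally show "snd K x y * (\<phi>' x * \<phi> x) = \<phi>' y * \<phi> y * snd M x y" .
  next
    fix x assume x: "x \<in> P"
    show "\<phi>' x * \<phi> x \<in> carrier_mat (fst K x) (fst M x)" using p'[OF x] p[OF x] by (rule mult_carrier_mat)
    show "\<psi> x * \<psi>' x \<in> carrier_mat (fst M x) (fst K x)" using q[OF x] q'[OF x] by (rule mult_carrier_mat)
  qed
qed


lemma fst_zero_rep[simp]: "fst (zero_rep :: ('p,'a::field) rep) x = 0"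
  and snd_zero_rep[simp]: "snd (zero_rep :: ('p,'a::field) rep) x y = 0\<^sub>m 0 0"
  by (simp_all add: zero_rep_def)

lemma dsum_cong:
  assumes i1: "rep_iso P ord M M'" and i2: "rep_iso P ord N N'"
    and M: "is_rep P ord M" and M': "is_rep P ord M'" and N: "is_rep P ord N" and N': "is_rep P ord N'"
  shows "rep_iso P ord (dsum M N) (dsum M' N')"
proof -
  obtain \<phi> \<psi> where p: "\<And>x. x \<in> P \<Longrightarrow> \<phi> x \<in> carrier_mat (fst M' x) (fst M x)"
    and q: "\<And>x. x \<in> P \<Longrightarrow> \<psi> x \<in> carrier_mat (fst M x) (fst M' x)"
    and pq: "\<And>x. x \<in> P \<Longrightarrow> \<phi> x * \<psi> x = 1\<^sub>m (fst M' x)"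
    and qp: "\<And>x. x \<in> P \<Longrightarrow> \<psi> x * \<phi> x = 1\<^sub>m (fst M x)"
    and nat: "\<And>x y. x \<in> P \<Longrightarrow> y \<in> P \<Longrightarrow> ord x y \<Longrightarrow> snd M' x y * \<phi> x = \<phi> y * snd M x y"
    using rep_isoE[OF i1] by blast
  obtain \<phi>' \<psi>' where p': "\<And>x. x \<in> P \<Longrightarrow> \<phi>' x \<in> carrier_mat (fst N' x) (fst N x)"
    and q': "\<And>x. x \<in> P \<Longrightarrow> \<psi>' x \<in> carrier_mat (fst N x) (fst N' x)"
    and pq': "\<And>x. x \<in> P \<Longrightarrow> \<phi>' x * \<psi>' x = 1\<^sub>m (fst N' x)"
    and qp': "\<And>x. x \<in> P \<Longrightarrow> \<psi>' x * \<phi>' x = 1\<^sub>m (fst N x)"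
    and nat': "\<And>x y. x \<in> P \<Longrightarrow> y \<in> P \<Longrightarrow> ord x y \<Longrightarrow> snd N' x y * \<phi>' x = \<phi>' y * snd N x y"
    using rep_isoE[OF i2] by blast
  show ?thesis
  proof (rule rep_isoI[of _ "\<lambda>x. four_block_mat (\<phi> x) (0\<^sub>m (fst M' x) (fst N x)) (0\<^sub>m (fst N' x) (fst M x)) (\<phi>' x)"
        _ _ "\<lambda>x. four_block_mat (\<psi> x) (0\<^sub>m (fst M x) (fst N' x)) (0\<^sub>m (fst N x) (fst M' x)) (\<psi>' x)"])
    fix x assume x: "x \<in> P"
    note c = p[OF x] q[OF x] p'[OF x] q'[OF x]
    show "four_block_mat (\<phi> x) (0\<^sub>m (fst M' x) (fst N x)) (0\<^sub>m (fst N' x) (fst M x)) (\<phi>' x) \<in> carrier_mat (fst (dsum M' N') x) (fst (dsum M N) x)"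
      using c by (simp add: fst_dsum)
    show "four_block_mat (\<psi> x) (0\<^sub>m (fst M x) (fst N' x)) (0\<^sub>m (fst N x) (fst M' x)) (\<psi>' x) \<in> carrier_mat (fst (dsum M N) x) (fst (dsum M' N') x)"
      using c by (simp add: fst_dsum)
    show "four_block_mat (\<phi> x) (0\<^sub>m (fst M' x) (fst N x)) (0\<^sub>m (fst N' x) (fst M x)) (\<phi>' x) *
          four_block_mat (\<psi> x) (0\<^sub>m (fst M x) (fst N' x)) (0\<^sub>m (fst N x) (fst M' x)) (\<psi>' x) = 1\<^sub>m (fst (dsum M' N') x)"
      by (subst mult_four_block_mat[of _ "fst M' x" "fst M x" _ "fst N x" _ "fst N' x" _ _ "fst M' x" _ "fst N' x"])
         (use c pq[OF x] pq'[OF x] in \<open>auto simp: fst_dsum\<close>)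
    show "four_block_mat (\<psi> x) (0\<^sub>m (fst M x) (fst N' x)) (0\<^sub>m (fst N x) (fst M' x)) (\<psi>' x) *
          four_block_mat (\<phi> x) (0\<^sub>m (fst M' x) (fst N x)) (0\<^sub>m (fst N' x) (fst M x)) (\<phi>' x) = 1\<^sub>m (fst (dsum M N) x)"
      by (subst mult_four_block_mat[of _ "fst M x" "fst M' x" _ "fst N' x" _ "fst N x" _ _ "fst M x" _ "fst N x"])
         (use c qp[OF x] qp'[OF x] in \<open>auto simp: fst_dsum\<close>)
  next
    fix x y assume x: "x \<in> P" and y: "y \<in> P" and o: "ord x y"
    note c = p[OF x] p'[OF x] p[OF y] p'[OF y] is_repD(1)[OF M x y o] is_repD(1)[OF M' x y o]
      is_repD(1)[OF N x y o] is_repD(1)[OF N' x y o]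
    have l: "snd (dsum M' N') x y * four_block_mat (\<phi> x) (0\<^sub>m (fst M' x) (fst N x)) (0\<^sub>m (fst N' x) (fst M x)) (\<phi>' x)
      = four_block_mat (snd M' x y * \<phi> x) (0\<^sub>m (fst M' y) (fst N x)) (0\<^sub>m (fst N' y) (fst M x)) (snd N' x y * \<phi>' x)"
      unfolding snd_dsum
      by (subst mult_four_block_mat[of _ "fst M' y" "fst M' x" _ "fst N' x" _ "fst N' y" _ _ "fst M x" _ "fst N x"]) (use c in auto)
    have r: "four_block_mat (\<phi> y) (0\<^sub>m (fst M' y) (fst N y)) (0\<^sub>m (fst N' y) (fst M y)) (\<phi>' y) * snd (dsum M N) x y
      = four_block_mat (\<phi> y * snd M x y) (0\<^sub>m (fst M' y) (fst N x)) (0\<^sub>m (fst N' y) (fst M x)) (\<phi>' y * snd N x y)"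
      unfolding snd_dsum
      by (subst mult_four_block_mat[of _ "fst M' y" "fst M y" _ "fst N y" _ "fst N' y" _ _ "fst M x" _ "fst N x"]) (use c in auto)
    show "snd (dsum M' N') x y * four_block_mat (\<phi> x) (0\<^sub>m (fst M' x) (fst N x)) (0\<^sub>m (fst N' x) (fst M x)) (\<phi>' x) =
          four_block_mat (\<phi> y) (0\<^sub>m (fst M' y) (fst N y)) (0\<^sub>m (fst N' y) (fst M y)) (\<phi>' y) * snd (dsum M N) x y"
      unfolding l r nat[OF x y o] nat'[OF x y o] ..
  qed
qed

definition swapm :: "nat \<Rightarrow> nat \<Rightarrow> 'a::field mat" where
  "swapm m n = four_block_mat (0\<^sub>m n m) (1\<^sub>m n) (1\<^sub>m m) (0\<^sub>m m n)"

lemma swapm_carrier: "swapm m n \<in> carrier_mat (m + n) (m + n)" "swapm m n \<in> carrier_mat (n + m) (n + m)"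
  unfolding carrier_mat_def swapm_def by simp_all

lemma swapm_inv: "swapm m n * swapm n m = (1\<^sub>m (n + m) :: 'a::field mat)"
  unfolding swapm_def by (subst mult_four_block_mat[of _ n m _ n _ m _ _ n _ m]) auto

lemma dsum_comm:
  assumes M: "is_rep P ord M" and N: "is_rep P ord N"
  shows "rep_iso P ord (dsum M N) (dsum N M)"
proof (rule rep_isoI[of _ "\<lambda>x. swapm (fst M x) (fst N x)" _ _ "\<lambda>x. swapm (fst N x) (fst M x)"])
  fix x y assume x: "x \<in> P" and y: "y \<in> P" and o: "ord x y"
  note c = is_repD(1)[OF M x y o] is_repD(1)[OF N x y o]
  have "snd (dsum N M) x y * swapm (fst M x) (fst N x) = four_block_mat (0\<^sub>m (fst N y) (fst M x)) (snd N x y) (snd M x y) (0\<^sub>m (fst M y) (fst N x))"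
    unfolding snd_dsum swapm_def
    by (subst mult_four_block_mat[of _ "fst N y" "fst N x" _ "fst M x" _ "fst M y" _ _ "fst M x" _ "fst N x"]) (use c in auto)
  moreover have "swapm (fst M y) (fst N y) * snd (dsum M N) x y = four_block_mat (0\<^sub>m (fst N y) (fst M x)) (snd N x y) (snd M x y) (0\<^sub>m (fst M y) (fst N x))"
    unfolding snd_dsum swapm_def
    by (subst mult_four_block_mat[of _ "fst N y" "fst M y" _ "fst N y" _ "fst M y" _ _ "fst M x" _ "fst N x"]) (use c in auto)
  ultimately show "snd (dsum N M) x y * swapm (fst M x) (fst N x) = swapm (fst M y) (fst N y) * snd (dsum M N) x y" by simp
qed (auto simp: fst_dsum swapm_carrier swapm_inv add.commute)

lemma dsum_assoc:
  assumes M: "is_rep P ord M" and N: "is_rep P ord N" and K: "is_rep P ord K"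
  shows "rep_iso P ord (dsum (dsum M N) K) (dsum M (dsum N K))"
proof (rule data_eq_iso)
  show "is_rep P ord (dsum (dsum M N) K)" by (intro is_rep_dsum M N K)
  fix x y assume x: "x \<in> P" and y: "y \<in> P" and o: "ord x y"
  note c = is_repD(1)[OF M x y o] is_repD(1)[OF N x y o] is_repD(1)[OF K x y o]
  show "snd (dsum (dsum M N) K) x y = snd (dsum M (dsum N K)) x y"
    unfolding snd_dsum fst_dsum by (rule eq_matI) (use c in auto)
qed (simp add: fst_dsum)

lemma dsum_zero_right:
  assumes M: "is_rep P ord M"
  shows "rep_iso P ord (dsum M zero_rep) M"
proof (rule data_eq_iso)
  show "is_rep P ord (dsum M zero_rep)" by (intro is_rep_dsum M is_rep_zero)
  fix x y assume x: "x \<in> P" and y: "y \<in> P" and o: "ord x y"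
  note c = is_repD(1)[OF M x y o]
  show "snd (dsum M zero_rep) x y = snd M x y"
    unfolding snd_dsum by (rule eq_matI) (use c in auto)
qed (simp add: fst_dsum)

lemma dsum_zero_left:
  assumes M: "is_rep P ord M"
  shows "rep_iso P ord (dsum zero_rep M) M"
proof (rule data_eq_iso)
  show "is_rep P ord (dsum zero_rep M)" by (intro is_rep_dsum M is_rep_zero)
  fix x y assume x: "x \<in> P" and y: "y \<in> P" and o: "ord x y"
  note c = is_repD(1)[OF M x y o]
  show "snd (dsum zero_rep M) x y = snd M x y"
    unfolding snd_dsum by (rule eq_matI) (use c in auto)
qed (simp add: fst_dsum)

lemma pull_dsum: "pull F (dsum M N) = dsum (pull F M) (pull F N)"
  by (simp add: pull_def dsum_def)

lemma pull_zero: "pull F zero_rep = zero_rep"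
  by (simp add: pull_def zero_rep_def)

lemma pull_pow: "pull F (rep_pow M k) = rep_pow (pull F M) k"
  by (induct k) (simp_all add: pull_dsum pull_zero)



definition rk :: "('p,'a::field) rep \<Rightarrow> 'p \<Rightarrow> 'p \<Rightarrow> nat" where
  "rk M x y = mrank (snd M x y)"

lemma rk_iso:
  assumes iso: "rep_iso P ord M N" and M: "is_rep P ord M" and N: "is_rep P ord N"
    and x: "x \<in> P" and y: "y \<in> P" and o: "ord x y"
  shows "rk M x y = rk N x y"
proof -
  obtain \<phi> \<psi> where p: "\<And>x. x \<in> P \<Longrightarrow> \<phi> x \<in> carrier_mat (fst N x) (fst M x)"
    and q: "\<And>x. x \<in> P \<Longrightarrow> \<psi> x \<in> carrier_mat (fst M x) (fst N x)"
    and pq: "\<And>x. x \<in> P \<Longrightarrow> \<phi> x * \<psi> x = 1\<^sub>m (fst N x)"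
    and qp: "\<And>x. x \<in> P \<Longrightarrow> \<psi> x * \<phi> x = 1\<^sub>m (fst M x)"
    and nat: "\<And>x y. x \<in> P \<Longrightarrow> y \<in> P \<Longrightarrow> ord x y \<Longrightarrow> snd N x y * \<phi> x = \<phi> y * snd M x y"
    using rep_isoE[OF iso] by blast
  note c = p[OF x] p[OF y] q[OF x] q[OF y] is_repD(1)[OF M x y o] is_repD(1)[OF N x y o]
  note d = c[THEN carrier_matD(1)] c[THEN carrier_matD(2)]
  have "snd N x y = snd N x y * (\<phi> x * \<psi> x)" using pq[OF x] c by simp
  also have "\<dots> = (snd N x y * \<phi> x) * \<psi> x" using d by (simp add: assoc_dims del: assoc_mult_mat)
  also have "\<dots> = \<phi> y * snd M x y * \<psi> x" unfolding nat[OF x y o] ..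
  finally have e: "snd N x y = \<phi> y * snd M x y * \<psi> x" .
  show ?thesis unfolding rk_def e
    by (rule mrank_inv[symmetric, OF c(5) c(2) c(4) qp[OF y] pq[OF y] c(3) c(1) qp[OF x] pq[OF x]])
qed

lemma rk_dsum:
  assumes M: "is_rep P ord M" and N: "is_rep P ord N" and x: "x \<in> P" and y: "y \<in> P" and o: "ord x y"
  shows "rk (dsum M N) x y = rk M x y + rk N x y"
  unfolding rk_def snd_dsum by (rule mrank_diag[OF is_repD(1)[OF M x y o] is_repD(1)[OF N x y o]])

lemma rk_zero[simp]: "rk (zero_rep :: ('p,'a::field) rep) x y = 0"
  unfolding rk_def by (simp add: mrank_zero)

lemma rk_pow:
  assumes M: "is_rep P ord M" and x: "x \<in> P" and y: "y \<in> P" and o: "ord x y"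
  shows "rk (rep_pow M k) x y = k * rk M x y"
  by (induct k) (simp_all add: rk_dsum[OF M is_rep_pow[OF M] x y o])

lemma rk_pull: "rk (pull F M) x y = rk M (F x) (F y)"
  by (simp add: rk_def pull_def)

definition R :: "('p,'a::field) grel \<Rightarrow> 'p \<Rightarrow> 'p \<Rightarrow> int" where
  "R x p q = int (rk (fst x) p q) - int (rk (snd x) p q)"

lemma is_grel_add: "is_grel P ord x \<Longrightarrow> is_grel P ord y \<Longrightarrow> is_grel P ord (gr_add x y)"
  by (simp add: is_grel_def gr_add_def is_rep_dsum)

lemma is_grel_smul: "is_grel P ord x \<Longrightarrow> is_grel P ord (gr_smul a x)"
  by (simp add: is_grel_def gr_smul_def is_rep_pow)

lemma is_grel_of: "is_rep P ord M \<Longrightarrow> is_grel P ord (gr_of M)"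
  by (simp add: is_grel_def gr_of_def is_rep_zero)

lemma R_add:
  assumes "is_grel P ord x" "is_grel P ord y" "p \<in> P" "q \<in> P" "ord p q"
  shows "R (gr_add x y) p q = R x p q + R y p q"
  using assms unfolding is_grel_def by (simp add: R_def gr_add_def rk_dsum[of P ord])

lemma R_smul:
  assumes "is_grel P ord x" "p \<in> P" "q \<in> P" "ord p q"
  shows "R (gr_smul a x) p q = a * R x p q"
  using assms by (auto simp: R_def gr_smul_def is_grel_def rk_pow algebra_simps)

lemma R_of: "R (gr_of M) p q = int (rk M p q)"
  by (simp add: R_def gr_of_def)

lemma R_pull: "R (gr_pull F x) p q = R x (F p) (F q)"
  by (simp add: R_def gr_pull_def rk_pull)

lemma gr_eq_R:
  assumes eq: "gr_eq P ord x y" and gx: "is_grel P ord x" and gy: "is_grel P ord y"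
    and p: "p \<in> P" and q: "q \<in> P" and o: "ord p q"
  shows "R x p q = R y p q"
proof -
  obtain X where X: "is_rep P ord X" and iso: "rep_iso P ord (dsum (dsum (fst x) (snd y)) X) (dsum (dsum (fst y) (snd x)) X)"
    using eq unfolding gr_eq_def by blast
  have r: "is_rep P ord (fst x)" "is_rep P ord (snd x)" "is_rep P ord (fst y)" "is_rep P ord (snd y)"
    using gx gy by (auto simp: is_grel_def)
  have "rk (dsum (dsum (fst x) (snd y)) X) p q = rk (dsum (dsum (fst y) (snd x)) X) p q"
    by (rule rk_iso[OF iso _ _ p q o]) (intro is_rep_dsum r X)+
  hence "rk (fst x) p q + rk (snd y) p q + rk X p q = rk (fst y) p q + rk (snd x) p q + rk X p q"
    by (simp add: rk_dsum[OF is_rep_dsum[OF r(1) r(4)] X p q o] rk_dsum[OF is_rep_dsum[OF r(3) r(2)] X p q o]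
        rk_dsum[OF r(1) r(4) p q o] rk_dsum[OF r(3) r(2) p q o])
  thus ?thesis unfolding R_def by linarith
qed



definition Mt :: "nat list \<Rightarrow> nat list \<Rightarrow> (nat \<Rightarrow> nat \<Rightarrow> 'a) \<Rightarrow> 'a::field mat" where
  "Mt xs ys g = mat (length xs) (length ys) (\<lambda>(p,q). g (xs ! p) (ys ! q))"

lemma Mt_carrier[simp]: "Mt xs ys g \<in> carrier_mat (length xs) (length ys)"
  "dim_row (Mt xs ys g) = length xs" "dim_col (Mt xs ys g) = length ys"
  by (auto simp: Mt_def)

lemma Mt_index[simp]: "p < length xs \<Longrightarrow> q < length ys \<Longrightarrow> Mt xs ys g $$ (p,q) = g (xs ! p) (ys ! q)"
  by (simp add: Mt_def)

lemma Mt_mult: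
  assumes "distinct ys"
  shows "Mt xs ys g * Mt ys zs h = Mt xs zs (\<lambda>x z. \<Sum>y\<in>set ys. g x y * h y z)"
proof (rule eq_matI)
  fix p q assume "p < dim_row (Mt xs zs (\<lambda>x z. \<Sum>y\<in>set ys. g x y * h y z))" "q < dim_col (Mt xs zs (\<lambda>x z. \<Sum>y\<in>set ys. g x y * h y z))"
  hence p: "p < length xs" and q: "q < length zs" by auto
  have "(Mt xs ys g * Mt ys zs h) $$ (p,q) = (\<Sum>l<length ys. g (xs ! p) (ys ! l) * h (ys ! l) (zs ! q))"
    using p q by (subst mult_entry[of _ _ "length ys"]) auto
  also have "\<dots> = (\<Sum>y\<in>set ys. g (xs ! p) y * h y (zs ! q))"
    by (rule sum.reindex_bij_betw[OF bij_betw_nth[OF assms refl refl]])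
  finally show "(Mt xs ys g * Mt ys zs h) $$ (p,q) = Mt xs zs (\<lambda>x z. \<Sum>y\<in>set ys. g x y * h y z) $$ (p,q)"
    using p q by simp
qed auto

lemma Mt_cong: "(\<And>x y. x \<in> set xs \<Longrightarrow> y \<in> set ys \<Longrightarrow> g x y = h x y) \<Longrightarrow> Mt xs ys g = Mt xs ys h"
  by (rule eq_matI) auto

lemma Mt_one: "distinct xs \<Longrightarrow> Mt xs xs (\<lambda>x y. if x = y then 1 else 0) = 1\<^sub>m (length xs)"
  by (rule eq_matI) (auto simp: nth_eq_iff_index_eq)

lemma sum_dl_left: "finite S \<Longrightarrow> (\<Sum>y\<in>S. (if x = y then 1 else 0) * (h y :: 'a::semiring_1)) = (if x \<in> S then h x else 0)"
  by (simp add: if_distrib[of "\<lambda>x. x * _"] cong: if_cong)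

lemma sum_dl_right: "finite S \<Longrightarrow> (\<Sum>y\<in>S. (h y :: 'a::semiring_1) * (if y = z then 1 else 0)) = (if z \<in> S then h z else 0)"
  by (simp add: if_distrib[of "\<lambda>x. _ * x"] cong: if_cong)

lemma mrank_Mt_dl:
  assumes dx: "distinct xs" and dy: "distinct ys"
  shows "mrank (Mt xs ys (\<lambda>x y. if x = y then 1 else 0) :: 'a::field mat) = card (set xs \<inter> set ys)"
proof -
  define zs where "zs = filter (\<lambda>x. x \<in> set ys) xs"
  have dz: "distinct zs" using dx by (simp add: zs_def)
  have sz: "set zs = set xs \<inter> set ys" by (auto simp: zs_def)
  have lz: "length zs = card (set xs \<inter> set ys)" using distinct_card[OF dz] sz by simp
  let ?D = "\<lambda>x y. if x = y then (1::'a) else 0"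
  have f: "Mt xs ys ?D = Mt xs zs ?D * Mt zs ys ?D"
    unfolding Mt_mult[OF dz] by (rule Mt_cong) (auto simp: sum_dl_left sz)
  have "Mt zs xs ?D * Mt xs ys ?D * Mt ys zs ?D = 1\<^sub>m (length zs)"
  proof -
    have "Mt zs xs ?D * Mt xs ys ?D = Mt zs ys ?D"
      unfolding Mt_mult[OF dx] by (rule Mt_cong) (auto simp: sum_dl_left sz)
    moreover have "Mt zs ys ?D * Mt ys zs ?D = Mt zs zs ?D"
      unfolding Mt_mult[OF dy] by (rule Mt_cong) (auto simp: sum_dl_left sz)
    ultimately show ?thesis using Mt_one[OF dz] by simp
  qed
  hence "length zs \<le> mrank (Mt xs ys ?D)"
    by (intro mrank_ge[of _ "length xs" "length ys" "Mt zs xs ?D" _ "Mt ys zs ?D"]) auto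
  moreover have "mrank (Mt xs ys ?D) \<le> length zs" by (rule mrank_le[OF f]) auto
  ultimately show ?thesis using lz by simp
qed

definition alive :: "(nat \<times> nat) list \<Rightarrow> nat \<Rightarrow> nat \<Rightarrow> bool" where
  "alive L i p \<longleftrightarrow> fst (L ! p) \<le> i \<and> i \<le> snd (L ! p)"

definition cs :: "(nat \<times> nat) list \<Rightarrow> nat \<Rightarrow> nat list" where
  "cs L i = filter (alive L i) [0..<length L]"

definition Brep :: "(nat \<times> nat) list \<Rightarrow> (nat, 'a::field) rep" where
  "Brep L = (\<lambda>i. length (cs L i), \<lambda>i j. Mt (cs L j) (cs L i) (\<lambda>x y. if x = y then 1 else 0))"

lemma cs_distinct[simp]: "distinct (cs L i)" by (simp add: cs_def)
lemma cs_set: "set (cs L i) = {p. p < length L \<and> alive L i p}" by (auto simp: cs_def)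
lemma cs_sorted: "sorted_wrt (<) (cs L i)" unfolding cs_def by (rule sorted_wrt_filter) simp

lemma fst_Brep: "fst (Brep L) i = length (cs L i)" by (simp add: Brep_def)
lemma snd_Brep: "snd (Brep L) i j = Mt (cs L j) (cs L i) (\<lambda>x y. if x = y then 1 else 0)" by (simp add: Brep_def)

lemma is_rep_Brep: "is_rep (P :: nat set) (\<le>) (Brep L :: (nat,'a::field) rep)"
  unfolding is_rep_def
proof (intro conjI ballI impI)
  fix i j k :: nat assume ij: "i \<le> j" and jk: "j \<le> k"
  show "snd (Brep L) i k = snd (Brep L) j k * (snd (Brep L) i j :: 'a mat)"
    unfolding snd_Brep Mt_mult[OF cs_distinct]
    by (rule Mt_cong) (use ij jk in \<open>auto simp: sum_dl_left cs_set alive_def\<close>)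
qed (auto simp: fst_Brep snd_Brep Mt_one)

definition cnt :: "(nat \<times> nat) list \<Rightarrow> nat \<Rightarrow> nat \<Rightarrow> nat" where
  "cnt L i j = length (filter (\<lambda>x. fst x \<le> i \<and> j \<le> snd x) L)"

lemma rk_Brep:
  assumes "i \<le> j"
  shows "rk (Brep L :: (nat,'a::field) rep) i j = cnt L i j"
proof -
  have "rk (Brep L :: (nat,'a) rep) i j = card (set (cs L j) \<inter> set (cs L i))"
    unfolding rk_def snd_Brep by (rule mrank_Mt_dl) simp_all
  also have "set (cs L j) \<inter> set (cs L i) = {p. p < length L \<and> (\<lambda>x. fst x \<le> i \<and> j \<le> snd x) (L ! p)}"
    using assms by (auto simp: cs_set alive_def)
  also have "card \<dots> = cnt L i j" unfolding cnt_def by (rule length_filter_conv_card[symmetric])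
  finally show ?thesis .
qed

lemma Brep_perm_iso:
  assumes m: "mset L = mset L'"
  shows "rep_iso (P :: nat set) (\<le>) (Brep L :: (nat,'a::field) rep) (Brep L')"
proof -
  obtain p where p: "p permutes {..<length L'}" and pl: "permute_list p L' = L"
    using mset_eq_permutation[OF m] by blast
  have len: "length L = length L'" using pl by auto
  let ?n = "length L"
  have Lp: "L ! y = L' ! p y" if "y < ?n" for y using permute_list_nth[OF p, of y] pl len that by simp
  have pin: "p y < ?n \<longleftrightarrow> y < ?n" for y using permutes_in_image[OF p, of y] len by simp
  have pinj: "p y = p y' \<longleftrightarrow> y = y'" for y y' using permutes_inj[OF p] by (auto dest: injD)
  have al: "alive L' i (p y) \<longleftrightarrow> alive L i y" if "y < ?n" for i y using Lp[OF that] by (simp add: alive_def)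
  have surj: "\<exists>y. y < ?n \<and> x = p y" if "x < ?n" for x
  proof -
    have "p ` {..<length L'} = {..<length L'}" using permutes_imp_bij[OF p] by (simp add: bij_betw_def)
    thus ?thesis using that len by (metis imageE lessThan_iff)
  qed
  let ?D = "\<lambda>x y. if x = y then (1::'a) else 0"
  define \<phi> where "\<phi> i = Mt (cs L' i) (cs L i) (\<lambda>x y. if x = p y then (1::'a) else 0)" for i
  define \<psi> where "\<psi> i = Mt (cs L i) (cs L' i) (\<lambda>y x. if x = p y then (1::'a) else 0)" for i
  show ?thesis
  proof (rule rep_isoI[of _ \<phi> _ _ \<psi>])
    fix i assume "i \<in> P"
    show "\<phi> i \<in> carrier_mat (fst (Brep L') i) (fst (Brep L) i)" by (simp add: \<phi>_def fst_Brep)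
    show "\<psi> i \<in> carrier_mat (fst (Brep L) i) (fst (Brep L') i)" by (simp add: \<psi>_def fst_Brep)
    show "\<phi> i * \<psi> i = 1\<^sub>m (fst (Brep L') i)"
      unfolding \<phi>_def \<psi>_def Mt_mult[OF cs_distinct] fst_Brep Mt_one[OF cs_distinct, symmetric]
    proof (rule Mt_cong)
      fix x x' assume x: "x \<in> set (cs L' i)" and x': "x' \<in> set (cs L' i)"
      then obtain y where y: "y < ?n" "x = p y" using surj len by (auto simp: cs_set)
      have yi: "y \<in> set (cs L i)" using x y al by (auto simp: cs_set)
      have "(\<Sum>z\<in>set (cs L i). (if x = p z then 1 else 0) * (if x' = p z then 1 else 0)) =
            (\<Sum>z\<in>set (cs L i). (if y = z then 1 else 0) * (if x' = p z then (1::'a) else 0))"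
        using y pinj by (intro sum.cong) auto
      also have "\<dots> = (if x = x' then 1 else 0)" using yi y by (simp add: sum_dl_left)
      finally show "(\<Sum>z\<in>set (cs L i). (if x = p z then 1 else 0) * (if x' = p z then 1 else 0)) = (if x = x' then 1 else (0::'a))" .
    qed
    show "\<psi> i * \<phi> i = 1\<^sub>m (fst (Brep L) i)"
      unfolding \<phi>_def \<psi>_def Mt_mult[OF cs_distinct] fst_Brep Mt_one[OF cs_distinct, symmetric]
    proof (rule Mt_cong)
      fix y y' assume y: "y \<in> set (cs L i)" and y': "y' \<in> set (cs L i)"
      have pyi: "p y \<in> set (cs L' i)" using y al pin len by (auto simp: cs_set)
      have "(\<Sum>x\<in>set (cs L' i). (if x = p y then 1 else 0) * (if x = p y' then 1 else 0)) =
            (\<Sum>x\<in>set (cs L' i). (if p y = x then 1 else 0) * (if x = p y' then (1::'a) else 0))"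
        by (intro sum.cong) auto
      also have "\<dots> = (if y = y' then 1 else 0)" using pyi pinj by (simp add: sum_dl_left)
      finally show "(\<Sum>x\<in>set (cs L' i). (if x = p y then 1 else 0) * (if x = p y' then 1 else 0)) = (if y = y' then 1 else (0::'a))" .
    qed
  next
    fix i j :: nat assume ij: "i \<le> j"
    show "snd (Brep L') i j * \<phi> i = \<phi> j * snd (Brep L) i j"
      unfolding \<phi>_def snd_Brep Mt_mult[OF cs_distinct]
    proof (rule Mt_cong)
      fix x y assume x: "x \<in> set (cs L' j)" and y: "y \<in> set (cs L i)"
      have l: "(\<Sum>z\<in>set (cs L' i). (if x = z then 1 else 0) * (if z = p y then 1 else 0)) = (if x \<in> set (cs L' i) then (if x = p y then 1 else (0::'a)) else 0)"
        by (simp add: sum_dl_left)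
      have r: "(\<Sum>z\<in>set (cs L j). (if x = p z then 1 else 0) * (if z = y then 1 else 0)) = (if y \<in> set (cs L j) then (if x = p y then 1 else (0::'a)) else 0)"
        by (simp add: sum_dl_right)
      have "x = p y \<Longrightarrow> x \<in> set (cs L' i) \<and> y \<in> set (cs L j)"
        using x y al pin len by (auto simp: cs_set)
      thus "(\<Sum>z\<in>set (cs L' i). (if x = z then 1 else 0) * (if z = p y then 1 else 0)) =
            (\<Sum>z\<in>set (cs L j). (if x = p z then 1 else 0) * (if z = y then 1 else (0::'a)))"
        unfolding l r by auto
    qed
  qed
qed

lemma pw_identity:
  fixes a b :: nat
  shows "(if (a,b) = x then 1 else 0::int) = (if fst x \<le> a \<and> b \<le> snd x then 1 else 0) - (if fst x < a \<and> b \<le> snd x then 1 else 0)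
     - (if fst x \<le> a \<and> b < snd x then 1 else 0) + (if fst x < a \<and> b < snd x then 1 else 0)"
  by (cases x) auto

lemma int_filter_identity:
  fixes a b :: nat
  shows "int (length (filter ((=) (a,b)) L)) =
     int (length (filter (\<lambda>x. fst x \<le> a \<and> b \<le> snd x) L)) - int (length (filter (\<lambda>x. fst x < a \<and> b \<le> snd x) L))
   - int (length (filter (\<lambda>x. fst x \<le> a \<and> b < snd x) L)) + int (length (filter (\<lambda>x. fst x < a \<and> b < snd x) L))"
proof (induct L)
  case (Cons x L)
  have e: "int (length (filter P (x # L))) = (if P x then 1 else 0) + int (length (filter P L))" for P by simp
  show ?case unfolding e using Cons pw_identity[of a b x] by linarith
qed simp

definition good :: "(nat \<times> nat) list \<Rightarrow> nat \<Rightarrow> bool" where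
  "good L n \<longleftrightarrow> (\<forall>x\<in>set L. fst x \<le> snd x \<and> snd x \<le> n) \<and> sorted (map fst L)"

lemma cnt_mset:
  assumes g: "good L n" and g': "good L' n" and c: "\<And>i j. i \<le> j \<Longrightarrow> j \<le> n \<Longrightarrow> cnt L i j = cnt L' i j"
  shows "mset L = mset L'"
proof (rule multiset_eqI)
  fix x :: "nat \<times> nat"
  obtain a b where x: "x = (a,b)" by (cases x)
  show "count (mset L) x = count (mset L') x"
  proof (cases "a \<le> b \<and> b \<le> n")
    case False
    hence "x \<notin> set L" "x \<notin> set L'" using g g' x by (auto simp: good_def)
    thus ?thesis by (simp add: count_mset)
  next
    case True
    have t1: "length (filter (\<lambda>x. fst x \<le> a \<and> b \<le> snd x) L) = length (filter (\<lambda>x. fst x \<le> a \<and> b \<le> snd x) L')"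
      using c[of a b] True by (simp add: cnt_def)
    have t2: "length (filter (\<lambda>x. fst x < a \<and> b \<le> snd x) L) = length (filter (\<lambda>x. fst x < a \<and> b \<le> snd x) L')"
    proof (cases a)
      case 0 thus ?thesis by simp
    next
      case (Suc a')
      have "(\<lambda>x::nat\<times>nat. fst x < a \<and> b \<le> snd x) = (\<lambda>x. fst x \<le> a' \<and> b \<le> snd x)" using Suc by auto
      thus ?thesis using c[of a' b] True Suc by (simp add: cnt_def)
    qed
    have t3: "length (filter (\<lambda>x. fst x \<le> a \<and> b < snd x) L) = length (filter (\<lambda>x. fst x \<le> a \<and> b < snd x) L')"
    proof (cases "b < n")
      case False
      hence "filter (\<lambda>x. fst x \<le> a \<and> b < snd x) L = []" "filter (\<lambda>x. fst x \<le> a \<and> b < snd x) L' = []"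
        using g g' True by (auto simp: good_def filter_empty_conv)
      thus ?thesis by simp
    next
      case True2: True
      have "(\<lambda>x::nat\<times>nat. fst x \<le> a \<and> b < snd x) = (\<lambda>x. fst x \<le> a \<and> Suc b \<le> snd x)" by auto
      thus ?thesis using c[of a "Suc b"] True True2 by (simp add: cnt_def)
    qed
    have t4: "length (filter (\<lambda>x. fst x < a \<and> b < snd x) L) = length (filter (\<lambda>x. fst x < a \<and> b < snd x) L')"
    proof (cases "b < n \<and> 0 < a")
      case False
      hence "filter (\<lambda>x. fst x < a \<and> b < snd x) L = []" "filter (\<lambda>x. fst x < a \<and> b < snd x) L' = []"
        using g g' True by (auto simp: good_def filter_empty_conv)
      thus ?thesis by simp
    next
      case True2: True
      then obtain a' where a': "a = Suc a'" by (cases a) auto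
      have "(\<lambda>x::nat\<times>nat. fst x < a \<and> b < snd x) = (\<lambda>x. fst x \<le> a' \<and> Suc b \<le> snd x)" using a' by auto
      thus ?thesis using c[of a' "Suc b"] True True2 a' by (simp add: cnt_def)
    qed
    have "int (count (mset L) x) = int (count (mset L') x)"
      unfolding count_mset count_list_eq_length_filter x
      using int_filter_identity[of a b L] int_filter_identity[of a b L'] t1 t2 t3 t4
      by simp
    thus ?thesis by simp
  qed
qed



definition pos :: "nat list \<Rightarrow> nat \<Rightarrow> nat" where
  "pos xs x = (THE r. r < length xs \<and> xs ! r = x)"

lemma pos_nth: "distinct xs \<Longrightarrow> r < length xs \<Longrightarrow> pos xs (xs ! r) = r"
  unfolding pos_def by (rule the_equality) (auto simp: nth_eq_iff_index_eq)

lemma pos_mem: assumes "distinct xs" "x \<in> set xs" shows "pos xs x < length xs" "xs ! pos xs x = x"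
proof -
  obtain r where r: "r < length xs" "xs ! r = x" using assms(2) by (auto simp: in_set_conv_nth)
  have "pos xs x = r" using pos_nth[OF assms(1) r(1)] r(2) by simp
  thus "pos xs x < length xs" "xs ! pos xs x = x" using r by simp_all
qed

lemma pos_mono:
  assumes s: "sorted_wrt (<) xs" and x: "x \<in> set xs" and y: "y \<in> set xs" and yx: "y < x"
  shows "pos xs y < pos xs x"
proof (rule ccontr)
  have d: "distinct xs" using s by (simp add: strict_sorted_iff)
  note px = pos_mem[OF d x] and py = pos_mem[OF d y]
  assume "\<not> pos xs y < pos xs x"
  hence le: "pos xs x \<le> pos xs y" by simp
  show False
  proof (cases "pos xs x = pos xs y")
    case True
    hence "x = y" using px(2) py(2) by metis
    thus False using yx by simp
  next
    case False
    hence "pos xs x < pos xs y" using le by simp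
    hence "xs ! pos xs x < xs ! pos xs y" by (rule sorted_wrt_nth_less[OF s _ py(1)])
    hence "x < y" unfolding px(2) py(2) .
    thus False using yx by simp
  qed
qed

lemma cs_mem: "x \<in> set (cs L i) \<longleftrightarrow> x < length L \<and> alive L i x" by (simp add: cs_set)

lemma good_fst_mono:
  assumes g: "good L n" and a: "a < length L" and b: "b < length L" and lt: "fst (L ! a) < fst (L ! b)"
  shows "a < b"
proof (rule ccontr)
  assume "\<not> a < b"
  hence "b \<le> a" by simp
  hence "map fst L ! b \<le> map fst L ! a" using g a by (intro sorted_nth_mono) (auto simp: good_def)
  thus False using lt a b by simp
qed

definition uh :: "nat list \<Rightarrow> (nat \<Rightarrow> nat \<Rightarrow> 'a) \<Rightarrow> nat \<Rightarrow> nat \<Rightarrow> 'a::field" where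
  "uh cn f x y = (if x \<in> set cn \<and> y \<in> set cn then f x y else (if x = y then 1 else 0))"

lemma uh_nat:
  assumes g: "good L n" and tri: "\<And>x y. x \<in> set (cs L n) \<Longrightarrow> y \<in> set (cs L n) \<Longrightarrow> y < x \<Longrightarrow> f x y = 0"
    and ij: "i \<le> j" and jn: "j \<le> n"
  shows "snd (Brep L) i j * Mt (cs L i) (cs L i) (uh (cs L n) f) = Mt (cs L j) (cs L j) (uh (cs L n) f) * (snd (Brep L) i j :: 'a::field mat)"
  unfolding snd_Brep Mt_mult[OF cs_distinct]
proof (rule Mt_cong)
  fix x y assume x: "x \<in> set (cs L j)" and y: "y \<in> set (cs L i)"
  have l: "(\<Sum>z\<in>set (cs L i). (if x = z then 1 else 0) * uh (cs L n) f z y) = (if x \<in> set (cs L i) then uh (cs L n) f x y else (0::'a))"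
    by (simp add: sum_dl_left)
  have r: "(\<Sum>z\<in>set (cs L j). uh (cs L n) f x z * (if z = y then 1 else 0)) = (if y \<in> set (cs L j) then uh (cs L n) f x y else (0::'a))"
    by (simp add: sum_dl_right)
  have xl: "x < length L" "fst (L ! x) \<le> j" "j \<le> snd (L ! x)" using x by (auto simp: cs_mem alive_def)
  have yl: "y < length L" "fst (L ! y) \<le> i" "i \<le> snd (L ! y)" using y by (auto simp: cs_mem alive_def)
  have c1: "uh (cs L n) f x y = 0" if "x \<in> set (cs L i)" "y \<notin> set (cs L j)"
  proof -
    have "snd (L ! y) < j" using that(2) yl ij by (auto simp: cs_mem alive_def)
    hence "y \<notin> set (cs L n)" using jn by (auto simp: cs_mem alive_def)
    moreover have "x \<noteq> y" using that x by auto
    ultimately show ?thesis by (simp add: uh_def)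
  qed
  have c2: "uh (cs L n) f x y = 0" if "x \<notin> set (cs L i)" "y \<in> set (cs L j)"
  proof -
    have "i < fst (L ! x)" using that(1) xl ij by (auto simp: cs_mem alive_def)
    hence "y < x" using good_fst_mono[OF g yl(1) xl(1)] yl by simp
    thus ?thesis using tri[of x y] by (auto simp: uh_def)
  qed
  show "(\<Sum>z\<in>set (cs L i). (if x = z then 1 else 0) * uh (cs L n) f z y) = (\<Sum>z\<in>set (cs L j). uh (cs L n) f x z * (if z = y then 1 else 0))"
    unfolding l r by (cases "x \<in> set (cs L i)"; cases "y \<in> set (cs L j)") (simp_all add: c1 c2)
qed

lemma uh_inv:
  assumes g: "good L n" and tri: "\<And>x y. x \<in> set (cs L n) \<Longrightarrow> y \<in> set (cs L n) \<Longrightarrow> y < x \<Longrightarrow> h x y = 0"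
    and fg: "\<And>x y. x \<in> set (cs L n) \<Longrightarrow> y \<in> set (cs L n) \<Longrightarrow> (\<Sum>z\<in>set (cs L n). f x z * h z y) = (if x = y then 1 else 0)"
    and i: "i \<le> n"
  shows "Mt (cs L i) (cs L i) (uh (cs L n) f) * Mt (cs L i) (cs L i) (uh (cs L n) h) = (1\<^sub>m (length (cs L i)) :: 'a::field mat)"
  unfolding Mt_mult[OF cs_distinct] Mt_one[OF cs_distinct, symmetric]
proof (rule Mt_cong)
  let ?cn = "cs L n"
  fix x y assume x: "x \<in> set (cs L i)" and y: "y \<in> set (cs L i)"
  show "(\<Sum>z\<in>set (cs L i). uh ?cn f x z * uh ?cn h z y) = (if x = y then 1 else (0::'a))"
  proof (cases "x \<in> set ?cn")
    case False
    have "(\<Sum>z\<in>set (cs L i). uh ?cn f x z * uh ?cn h z y) = (\<Sum>z\<in>set (cs L i). (if x = z then 1 else 0) * uh ?cn h z y)"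
      using False by (intro sum.cong) (auto simp: uh_def)
    also have "\<dots> = uh ?cn h x y" using x by (simp add: sum_dl_left)
    finally show ?thesis using False by (simp add: uh_def)
  next
    case xc: True
    show ?thesis
    proof (cases "y \<in> set ?cn")
      case False
      have "(\<Sum>z\<in>set (cs L i). uh ?cn f x z * uh ?cn h z y) = (\<Sum>z\<in>set (cs L i). uh ?cn f x z * (if z = y then 1 else 0))"
        using False by (intro sum.cong) (auto simp: uh_def)
      also have "\<dots> = uh ?cn f x y" using y by (simp add: sum_dl_right)
      finally show ?thesis using False xc by (auto simp: uh_def)
    next
      case yc: True
      have "(\<Sum>z\<in>set (cs L i). uh ?cn f x z * uh ?cn h z y) = (\<Sum>z\<in>set (cs L i). if z \<in> set ?cn then f x z * h z y else 0)"
      proof (rule sum.cong[OF refl])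
      fix z assume "z \<in> set (cs L i)"
      show "uh ?cn f x z * uh ?cn h z y = (if z \<in> set ?cn then f x z * h z y else 0)"
      proof (cases "z \<in> set ?cn")
        case False
        hence "x \<noteq> z" using xc by auto
        thus ?thesis using False by (simp add: uh_def)
      qed (simp add: uh_def xc yc)
    qed
      also have "\<dots> = (\<Sum>z\<in>set (cs L i) \<inter> set ?cn. f x z * h z y)" by (simp add: sum.inter_restrict)
      also have "\<dots> = (\<Sum>z\<in>set ?cn. f x z * h z y)"
      proof (rule sum.mono_neutral_left)
        show "\<forall>z\<in>set ?cn - set (cs L i) \<inter> set ?cn. f x z * h z y = 0"
        proof
          fix z assume z: "z \<in> set ?cn - set (cs L i) \<inter> set ?cn"
          have zl: "z < length L" "fst (L ! z) \<le> n" "n \<le> snd (L ! z)" using z by (auto simp: cs_mem alive_def)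
          have yl: "y < length L" "fst (L ! y) \<le> i" using y by (auto simp: cs_mem alive_def)
          have "z \<notin> set (cs L i)" using z by blast
          hence "\<not> alive L i z" using zl(1) by (simp add: cs_mem)
          hence "i < fst (L ! z)" using zl i by (simp add: alive_def)
          hence "y < z" using good_fst_mono[OF g yl(1) zl(1)] yl by simp
          thus "f x z * h z y = 0" using tri[of z y] z yc by simp
        qed
      qed auto
      also have "\<dots> = (if x = y then 1 else 0)" by (rule fg[OF xc yc])
      finally show ?thesis .
    qed
  qed
qed

definition matf :: "nat list \<Rightarrow> 'a mat \<Rightarrow> nat \<Rightarrow> nat \<Rightarrow> 'a" where
  "matf cn U x y = U $$ (pos cn x, pos cn y)"

lemma matf_tri:
  assumes s: "sorted_wrt (<) cn" and U: "\<forall>i j. j < i \<longrightarrow> i < length cn \<longrightarrow> U $$ (i,j) = 0"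
  shows "\<And>x y. x \<in> set cn \<Longrightarrow> y \<in> set cn \<Longrightarrow> y < x \<Longrightarrow> matf cn U x y = 0"
proof -
  have d: "distinct cn" using s by (simp add: strict_sorted_iff)
  fix x y assume x: "x \<in> set cn" and y: "y \<in> set cn" and yx: "y < x"
  have "pos cn y < pos cn x" by (rule pos_mono[OF s x y yx])
  moreover have "pos cn x < length cn" by (rule pos_mem(1)[OF d x])
  ultimately show "matf cn U x y = 0" using U unfolding matf_def by simp
qed

lemma matf_prod:
  fixes U V :: "'a::field mat"
  assumes d: "distinct cn" and U: "U \<in> carrier_mat (length cn) (length cn)" and V: "V \<in> carrier_mat (length cn) (length cn)"
    and UV: "U * V = 1\<^sub>m (length cn)" and x: "x \<in> set cn" and y: "y \<in> set cn"
  shows "(\<Sum>z\<in>set cn. matf cn U x z * matf cn V z y) = (if x = y then 1 else 0)"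
proof -
  have "(\<Sum>z\<in>set cn. matf cn U x z * matf cn V z y) = (\<Sum>r<length cn. matf cn U x (cn ! r) * matf cn V (cn ! r) y)"
    by (rule sum.reindex_bij_betw[OF bij_betw_nth[OF d refl refl], symmetric])
  also have "\<dots> = (\<Sum>r<length cn. U $$ (pos cn x, r) * V $$ (r, pos cn y))"
    by (intro sum.cong) (auto simp: matf_def pos_nth[OF d])
  also have "\<dots> = (U * V) $$ (pos cn x, pos cn y)"
    using pos_mem[OF d x] pos_mem[OF d y] by (subst mult_entry[OF U V]) auto
  also have "\<dots> = (if x = y then 1 else 0)"
  proof -
    have "pos cn x = pos cn y \<longleftrightarrow> x = y" using pos_mem(2)[OF d x] pos_mem(2)[OF d y] by metis
    thus ?thesis unfolding UV using pos_mem(1)[OF d x] pos_mem(1)[OF d y] by simp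
  qed
  finally show ?thesis .
qed

lemma Mt_uh_matf:
  assumes d: "distinct cn" and U: "U \<in> carrier_mat (length cn) (length cn)"
  shows "Mt cn cn (uh cn (matf cn U)) = U"
proof (rule eq_matI)
  fix p q assume "p < dim_row U" "q < dim_col U"
  hence p: "p < length cn" and q: "q < length cn" using U by auto
  show "Mt cn cn (uh cn (matf cn U)) $$ (p,q) = U $$ (p,q)"
    using p q by (simp add: uh_def matf_def pos_nth[OF d])
qed (use U in auto)



lemma filter_mem_sorted:
  assumes s: "sorted_wrt (<) W" and sub: "set W \<subseteq> {..<N}"
  shows "filter (\<lambda>p. p \<in> set W) [0..<N] = W"
proof (rule sorted_distinct_set_unique)
  show "sorted (filter (\<lambda>p. p \<in> set W) [0..<N])" by (rule sorted_wrt_filter) simp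
  show "distinct (filter (\<lambda>p. p \<in> set W) [0..<N])" by simp
  show "sorted W" "distinct W" using s by (simp_all add: strict_sorted_iff)
  show "set (filter (\<lambda>p. p \<in> set W) [0..<N]) = set W" using sub by auto
qed

lemma structure_step:
  fixes M :: "(nat,'a::field) rep"
  assumes M: "is_rep {0..Suc n} (\<le>) M" and g: "good L n" and iso: "rep_iso {0..n} (\<le>) M (Brep L)"
  shows "\<exists>L'. good L' (Suc n) \<and> rep_iso {0..Suc n} (\<le>) M (Brep L')"
proof -
  obtain \<phi> \<psi> where p: "\<And>x. x \<in> {0..n} \<Longrightarrow> \<phi> x \<in> carrier_mat (fst (Brep L :: (nat,'a) rep) x) (fst M x)"
    and q: "\<And>x. x \<in> {0..n} \<Longrightarrow> \<psi> x \<in> carrier_mat (fst M x) (fst (Brep L :: (nat,'a) rep) x)"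
    and pq: "\<And>x. x \<in> {0..n} \<Longrightarrow> \<phi> x * \<psi> x = 1\<^sub>m (fst (Brep L :: (nat,'a) rep) x)"
    and qp: "\<And>x. x \<in> {0..n} \<Longrightarrow> \<psi> x * \<phi> x = 1\<^sub>m (fst M x)"
    and nat: "\<And>x y. x \<in> {0..n} \<Longrightarrow> y \<in> {0..n} \<Longrightarrow> x \<le> y \<Longrightarrow> snd (Brep L) x y * \<phi> x = \<phi> y * snd M x y"
    using rep_isoE[OF iso] by blast
  define cn where "cn = cs L n"
  define s where "s = length cn"
  define d where "d = fst M (Suc n)"
  have cn_sorted: "sorted_wrt (<) cn" unfolding cn_def by (rule cs_sorted)
  have cn_dist: "distinct cn" unfolding cn_def by simp
  have cn_mem: "x < length L \<and> snd (L ! x) = n \<and> fst (L ! x) \<le> n" if "x \<in> set cn" for x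
  proof -
    have x: "x < length L" "alive L n x" using that unfolding cn_def cs_mem by simp_all
    have "snd (L ! x) \<le> n" using g x(1) nth_mem[OF x(1)] unfolding good_def by blast
    thus ?thesis using x by (simp add: alive_def)
  qed
  have Mn: "snd M n (Suc n) \<in> carrier_mat d (fst M n)" unfolding d_def by (rule is_repD(1)[OF M]) auto
  have psin: "\<psi> n \<in> carrier_mat (fst M n) s" using q[of n] by (simp add: fst_Brep s_def cn_def)
  define A where "A = snd M n (Suc n) * \<psi> n"
  have Ac: "A \<in> carrier_mat d s" unfolding A_def using Mn psin by (rule mult_carrier_mat)
  obtain G Gi U Ui zs where Gc: "G \<in> carrier_mat d d" and Gic: "Gi \<in> carrier_mat d d" and GGi: "G * Gi = 1\<^sub>m d"
    and GiG: "Gi * G = 1\<^sub>m d" and Uc: "U \<in> carrier_mat s s" and Uic: "Ui \<in> carrier_mat s s" and UUi: "U * Ui = 1\<^sub>m s"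
    and UiU: "Ui * U = 1\<^sub>m s" and tri: "\<forall>i j. j < i \<longrightarrow> i < s \<longrightarrow> U $$ (i,j) = 0 \<and> Ui $$ (i,j) = 0"
    and zs_s: "sorted_wrt (<) zs" and zs_sub: "set zs \<subseteq> {..<s}" and zs_len: "length zs \<le> d"
    and red: "G * A * U = canon d s zs"
    using reduction[OF Ac] by blast
  have zs_dist: "distinct zs" using zs_s by (simp add: strict_sorted_iff)
  define W where "W = map ((!) cn) zs"
  define k where "k = d - length zs"
  define L' where "L' = map (\<lambda>p. if p \<in> set W then (fst (L ! p), Suc n) else L ! p) [0..<length L] @ replicate k (Suc n, Suc n)"
  have W_sorted: "sorted_wrt (<) W" unfolding W_def sorted_wrt_map
  proof (rule sorted_wrt_mono_rel[OF _ zs_s])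
    fix a b assume "a \<in> set zs" "b \<in> set zs" "a < b"
    thus "cn ! a < cn ! b" using zs_sub sorted_wrt_nth_less[OF cn_sorted, of a b] by (auto simp: s_def)
  qed
  have W_sub: "set W \<subseteq> set cn" unfolding W_def using zs_sub by (auto simp: s_def)
  have W_len: "length W = length zs" by (simp add: W_def)
  have W_nth: "W ! r = cn ! (zs ! r)" if "r < length zs" for r using that by (simp add: W_def)
  have L'_len: "length L' = length L + k" by (simp add: L'_def)
  have L'_nth1: "L' ! p = (if p \<in> set W then (fst (L ! p), Suc n) else L ! p)" if "p < length L" for p
    using that by (simp add: L'_def nth_append)
  have L'_nth2: "L' ! p = (Suc n, Suc n)" if "length L \<le> p" "p < length L + k" for p
    using that by (simp add: L'_def nth_append)
  have upt_split: "[0..<length L + k] = [0..<length L] @ [length L..<length L + k]"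
    by (rule upt_add_eq_append) simp
  have cs_eq: "cs L' i = cs L i" if i: "i \<le> n" for i
  proof -
    have "cs L' i = filter (alive L' i) [0..<length L] @ filter (alive L' i) [length L..<length L + k]"
      unfolding cs_def L'_len upt_split by simp
    also have "filter (alive L' i) [length L..<length L + k] = []"
      using i by (auto simp: filter_empty_conv L'_nth2 alive_def)
    also have "filter (alive L' i) [0..<length L] = filter (alive L i) [0..<length L]"
    proof (rule filter_cong[OF refl])
      fix p assume "p \<in> set [0..<length L]"
      hence pl: "p < length L" by simp
      show "alive L' i p = alive L i p"
      proof (cases "p \<in> set W")
        case True
        hence "snd (L ! p) = n" using cn_mem W_sub by blast
        thus ?thesis using True i pl by (simp add: L'_nth1 alive_def)
      next
        case False thus ?thesis using pl by (simp add: L'_nth1 alive_def)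
      qed
    qed
    finally show ?thesis by (simp add: cs_def)
  qed
  have cs_top: "cs L' (Suc n) = W @ [length L..<length L + k]"
  proof -
    have "cs L' (Suc n) = filter (alive L' (Suc n)) [0..<length L] @ filter (alive L' (Suc n)) [length L..<length L + k]"
      unfolding cs_def L'_len upt_split by simp
    also have "filter (alive L' (Suc n)) [length L..<length L + k] = [length L..<length L + k]"
      by (rule filter_True) (auto simp: L'_nth2 alive_def)
    also have "filter (alive L' (Suc n)) [0..<length L] = filter (\<lambda>p. p \<in> set W) [0..<length L]"
    proof (rule filter_cong[OF refl])
      fix p assume "p \<in> set [0..<length L]"
      hence pl: "p < length L" by simp
      show "alive L' (Suc n) p = (p \<in> set W)"
      proof (cases "p \<in> set W")
        case True
        hence "fst (L ! p) \<le> n" using cn_mem W_sub by blast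
        thus ?thesis using True pl by (simp add: L'_nth1 alive_def)
      next
        case False
        have "snd (L ! p) \<le> n" using g pl nth_mem[OF pl] unfolding good_def by blast
        thus ?thesis using False pl by (simp add: L'_nth1 alive_def)
      qed
    qed
    also have "\<dots> = W" using W_sorted W_sub cn_mem by (intro filter_mem_sorted) auto
    finally show ?thesis .
  qed
  have good': "good L' (Suc n)"
  proof -
    have "\<forall>x\<in>set L'. fst x \<le> snd x \<and> snd x \<le> Suc n"
    proof
      fix x assume "x \<in> set L'"
      then obtain p where pl: "p < length L'" and xp: "x = L' ! p" by (auto simp: in_set_conv_nth)
      show "fst x \<le> snd x \<and> snd x \<le> Suc n"
      proof (cases "p < length L")
        case True
        have "fst (L ! p) \<le> snd (L ! p) \<and> snd (L ! p) \<le> n" using g True nth_mem[OF True] unfolding good_def by blast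
        thus ?thesis using True xp by (simp add: L'_nth1)
      next
        case False thus ?thesis using pl xp L'_len by (simp add: L'_nth2)
      qed
    qed
    moreover have "map fst L' = map fst L @ replicate k (Suc n)"
    proof -
      have "map fst (map (\<lambda>p. if p \<in> set W then (fst (L ! p), Suc n) else L ! p) [0..<length L])
          = map (\<lambda>p. fst (L ! p)) [0..<length L]" by (simp add: if_distrib[of fst] cong: map_cong)
      also have "\<dots> = map fst (map (\<lambda>p. L ! p) [0..<length L])" by simp
      also have "map (\<lambda>p. L ! p) [0..<length L] = L" by (rule map_nth)
      finally show ?thesis unfolding L'_def by simp
    qed
    moreover have "sorted (map fst L @ replicate k (Suc n))"
      unfolding sorted_append
    proof (intro conjI ballI)
      show "sorted (map fst L)" using g unfolding good_def by simp
      show "sorted (replicate k (Suc n))" by simp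
      fix x y assume x: "x \<in> set (map fst L)" and y: "y \<in> set (replicate k (Suc n))"
      from x obtain z where z: "z \<in> set L" "x = fst z" by auto
      have "fst z \<le> snd z \<and> snd z \<le> n" using g z(1) unfolding good_def by blast
      thus "x \<le> y" using z(2) y by simp
    qed
    ultimately show ?thesis unfolding good_def by simp
  qed
  have top_dim: "length (cs L' (Suc n)) = d" unfolding cs_top using W_len zs_len by (simp add: k_def)
  have canonB: "snd (Brep L' :: (nat,'a) rep) n (Suc n) = canon d s zs"
  proof (rule eq_matI)
    fix r q assume "r < dim_row (canon d s zs :: 'a mat)" "q < dim_col (canon d s zs :: 'a mat)"
    hence r: "r < d" and qs: "q < s" by auto
    have e: "snd (Brep L' :: (nat,'a) rep) n (Suc n) $$ (r,q) = (if cs L' (Suc n) ! r = cn ! q then 1 else 0)"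
      unfolding snd_Brep using r qs top_dim by (simp add: cs_eq cn_def s_def)
    show "snd (Brep L' :: (nat,'a) rep) n (Suc n) $$ (r,q) = canon d s zs $$ (r,q)"
    proof (cases "r < length zs")
      case True
      have zr: "zs ! r < s" using zs_sub nth_mem[OF True] by auto
      have "(cs L' (Suc n) ! r = cn ! q) = (zs ! r = q)"
        unfolding cs_top using True W_len W_nth[OF True] nth_eq_iff_index_eq[OF cn_dist, of "zs ! r" q] zr qs
        by (simp add: nth_append s_def)
      thus ?thesis unfolding e using True r qs by (simp add: canon_def)
    next
      case False
      have "cn ! q < length L" using cn_mem nth_mem[of q cn] qs by (auto simp: s_def)
      moreover have "cs L' (Suc n) ! r = length L + (r - length zs)"
        unfolding cs_top using False W_len r by (simp add: nth_append k_def)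
      ultimately have "cs L' (Suc n) ! r \<noteq> cn ! q" by simp
      thus ?thesis unfolding e using False r qs by (simp add: canon_def)
    qed
  qed (use top_dim in \<open>simp_all add: snd_Brep cs_eq cn_def s_def\<close>)
  define u where "u = matf cn U"
  define ui where "ui = matf cn Ui"
  have Uc': "U \<in> carrier_mat (length cn) (length cn)" and Uic': "Ui \<in> carrier_mat (length cn) (length cn)"
    using Uc Uic by (simp_all add: s_def)
  have UUi': "U * Ui = 1\<^sub>m (length cn)" and UiU': "Ui * U = 1\<^sub>m (length cn)" using UUi UiU by (simp_all add: s_def)
  have triU: "\<And>x y. x \<in> set (cs L n) \<Longrightarrow> y \<in> set (cs L n) \<Longrightarrow> y < x \<Longrightarrow> u x y = 0"
    unfolding u_def cn_def[symmetric] by (rule matf_tri[OF cn_sorted]) (use tri in \<open>simp add: s_def\<close>)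
  have triUi: "\<And>x y. x \<in> set (cs L n) \<Longrightarrow> y \<in> set (cs L n) \<Longrightarrow> y < x \<Longrightarrow> ui x y = 0"
    unfolding ui_def cn_def[symmetric] by (rule matf_tri[OF cn_sorted]) (use tri in \<open>simp add: s_def\<close>)
  have prodU: "\<And>x y. x \<in> set (cs L n) \<Longrightarrow> y \<in> set (cs L n) \<Longrightarrow> (\<Sum>z\<in>set (cs L n). u x z * ui z y) = (if x = y then 1 else 0)"
    unfolding u_def ui_def cn_def[symmetric] by (rule matf_prod[OF cn_dist Uc' Uic' UUi'])
  have prodUi: "\<And>x y. x \<in> set (cs L n) \<Longrightarrow> y \<in> set (cs L n) \<Longrightarrow> (\<Sum>z\<in>set (cs L n). ui x z * u z y) = (if x = y then 1 else 0)"
    unfolding u_def ui_def cn_def[symmetric] by (rule matf_prod[OF cn_dist Uic' Uc' UiU'])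
  define Uh where "Uh i = (Mt (cs L i) (cs L i) (uh (cs L n) u) :: 'a mat)" for i
  define Uih where "Uih i = (Mt (cs L i) (cs L i) (uh (cs L n) ui) :: 'a mat)" for i
  have Uhc: "Uh i \<in> carrier_mat (length (cs L i)) (length (cs L i))" "Uih i \<in> carrier_mat (length (cs L i)) (length (cs L i))" for i
    by (simp_all add: Uh_def Uih_def)
  have Uih_nat: "snd (Brep L) i j * Uih i = Uih j * snd (Brep L) i j" if "i \<le> j" "j \<le> n" for i j
    unfolding Uih_def by (rule uh_nat[OF g triUi that])
  have Uh_inv1: "Uh i * Uih i = 1\<^sub>m (length (cs L i))" if "i \<le> n" for i
    unfolding Uh_def Uih_def by (rule uh_inv[OF g triUi prodU that])
  have Uh_inv2: "Uih i * Uh i = 1\<^sub>m (length (cs L i))" if "i \<le> n" for i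
    unfolding Uh_def Uih_def by (rule uh_inv[OF g triU prodUi that])
  have Uih_n: "Uih n = Ui" unfolding Uih_def ui_def cn_def[symmetric] by (rule Mt_uh_matf[OF cn_dist Uic'])
  have pc: "\<phi> x \<in> carrier_mat (length (cs L x)) (fst M x)" if "x \<le> n" for x using p[of x] that by (simp add: fst_Brep)
  have qc: "\<psi> x \<in> carrier_mat (fst M x) (length (cs L x))" if "x \<le> n" for x using q[of x] that by (simp add: fst_Brep)
  have pq': "\<phi> x * \<psi> x = 1\<^sub>m (length (cs L x))" if "x \<le> n" for x using pq[of x] that by (simp add: fst_Brep)
  have qp': "\<psi> x * \<phi> x = 1\<^sub>m (fst M x)" if "x \<le> n" for x using qp[of x] that by simp
  define \<phi>' where "\<phi>' i = (if i \<le> n then Uih i * \<phi> i else G)" for i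
  define \<psi>' where "\<psi>' i = (if i \<le> n then \<psi> i * Uh i else Gi)" for i
  have dM: "fst M (Suc n) = d" by (simp add: d_def)
  have fB': "fst (Brep L' :: (nat,'a) rep) i = (if i \<le> n then length (cs L i) else d)" if "i \<le> Suc n" for i
    using that top_dim cs_eq by (cases "i \<le> n") (simp_all add: fst_Brep, metis le_SucE)
  show ?thesis
  proof (intro exI conjI)
    show "good L' (Suc n)" by (rule good')
    show "rep_iso {0..Suc n} (\<le>) M (Brep L')"
    proof (rule rep_isoI[of _ \<phi>' _ _ \<psi>'])
      fix x assume "x \<in> {0..Suc n}"
      hence x: "x \<le> Suc n" by simp
      show "\<phi>' x \<in> carrier_mat (fst (Brep L') x) (fst M x)"
      proof (cases "x \<le> n")
        case True
        have "Uih x * \<phi> x \<in> carrier_mat (length (cs L x)) (fst M x)" by (rule mult_carrier_mat[OF Uhc(2) pc[OF True]])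
        thus ?thesis using True by (simp add: \<phi>'_def fst_Brep cs_eq)
      next
        case False hence "x = Suc n" using x by simp
        thus ?thesis using Gc dM top_dim by (simp add: \<phi>'_def fst_Brep)
      qed
      show "\<psi>' x \<in> carrier_mat (fst M x) (fst (Brep L') x)"
      proof (cases "x \<le> n")
        case True
        have "\<psi> x * Uh x \<in> carrier_mat (fst M x) (length (cs L x))" by (rule mult_carrier_mat[OF qc[OF True] Uhc(1)])
        thus ?thesis using True by (simp add: \<psi>'_def fst_Brep cs_eq)
      next
        case False hence "x = Suc n" using x by simp
        thus ?thesis using Gic dM top_dim by (simp add: \<psi>'_def fst_Brep)
      qed
      show "\<phi>' x * \<psi>' x = 1\<^sub>m (fst (Brep L') x)"
      proof (cases "x \<le> n")
        case True
        note c = Uhc(1)[of x] Uhc(2)[of x] pc[OF True] qc[OF True]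
        note dd = c[THEN carrier_matD(1)] c[THEN carrier_matD(2)]
        have "Uih x * \<phi> x * (\<psi> x * Uh x) = Uih x * (\<phi> x * \<psi> x) * Uh x" using dd by (simp add: assoc_dims del: assoc_mult_mat)
        also have "\<dots> = Uih x * Uh x" using pq'[OF True] c by simp
        also have "\<dots> = 1\<^sub>m (length (cs L x))" by (rule Uh_inv2[OF True])
        finally show ?thesis using True by (simp add: \<phi>'_def \<psi>'_def fst_Brep cs_eq)
      next
        case False hence "x = Suc n" using x by simp
        thus ?thesis using GGi top_dim by (simp add: \<phi>'_def \<psi>'_def fst_Brep)
      qed
      show "\<psi>' x * \<phi>' x = 1\<^sub>m (fst M x)"
      proof (cases "x \<le> n")
        case True
        note c = Uhc(1)[of x] Uhc(2)[of x] pc[OF True] qc[OF True]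
        note dd = c[THEN carrier_matD(1)] c[THEN carrier_matD(2)]
        have "\<psi> x * Uh x * (Uih x * \<phi> x) = \<psi> x * (Uh x * Uih x) * \<phi> x" using dd by (simp add: assoc_dims del: assoc_mult_mat)
        also have "\<dots> = \<psi> x * \<phi> x" using Uh_inv1[OF True] c by simp
        also have "\<dots> = 1\<^sub>m (fst M x)" by (rule qp'[OF True])
        finally show ?thesis unfolding \<phi>'_def \<psi>'_def using True by simp
      next
        case False hence "x = Suc n" using x by simp
        thus ?thesis unfolding \<phi>'_def \<psi>'_def using GiG dM by simp
      qed
    next
      fix x y assume "x \<in> {0..Suc n}" "y \<in> {0..Suc n}" and xy: "x \<le> y"
      hence x: "x \<le> Suc n" and y: "y \<le> Suc n" by auto
      show "snd (Brep L') x y * \<phi>' x = \<phi>' y * snd M x y"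
      proof (cases "y \<le> n")
        case True
        have xn: "x \<le> n" using xy True by simp
        have Bxy: "snd (Brep L' :: (nat,'a) rep) x y = snd (Brep L) x y" using xn True by (simp add: snd_Brep cs_eq)
        note c = Uhc(2)[of x] Uhc(2)[of y] pc[OF xn] pc[OF True] is_repD(1)[OF is_rep_Brep[of "{0..n}" L] _ _ xy, of, simplified fst_Brep]
          is_repD(1)[OF M _ _ xy]
        have cB: "snd (Brep L :: (nat,'a) rep) x y \<in> carrier_mat (length (cs L y)) (length (cs L x))" by (simp add: snd_Brep)
        have cM: "snd M x y \<in> carrier_mat (fst M y) (fst M x)" using is_repD(1)[OF M _ _ xy] x y by simp
        note c = Uhc(2)[of x] Uhc(2)[of y] pc[OF xn] pc[OF True] cB cM
        note dd = c[THEN carrier_matD(1)] c[THEN carrier_matD(2)]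
        have "snd (Brep L) x y * (Uih x * \<phi> x) = (snd (Brep L) x y * Uih x) * \<phi> x" using dd by (simp add: assoc_dims del: assoc_mult_mat)
        also have "\<dots> = (Uih y * snd (Brep L) x y) * \<phi> x" unfolding Uih_nat[OF xy True] ..
        also have "\<dots> = Uih y * (snd (Brep L) x y * \<phi> x)" using dd by (simp add: assoc_dims del: assoc_mult_mat)
        also have "\<dots> = Uih y * (\<phi> y * snd M x y)" using nat[of x y] xn True xy by simp
        also have "\<dots> = Uih y * \<phi> y * snd M x y" using dd by (simp add: assoc_dims del: assoc_mult_mat)
        finally show ?thesis unfolding \<phi>'_def Bxy using xn True by simp
      next
        case False
        hence yS: "y = Suc n" using y by simp
        show ?thesis
        proof (cases "x \<le> n")
          case False
          hence "x = Suc n" using x by simp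
          have e1: "snd M (Suc n) (Suc n) = 1\<^sub>m d" using is_repD(2)[OF M, of "Suc n" "Suc n"] dM by simp
          have e2: "snd (Brep L' :: (nat,'a) rep) (Suc n) (Suc n) = 1\<^sub>m d"
            using is_repD(2)[OF is_rep_Brep[of "{0..Suc n}" L'], of "Suc n" "Suc n"] top_dim by (simp add: fst_Brep)
          show ?thesis using yS \<open>x = Suc n\<close> Gc e1 e2 by (simp add: \<phi>'_def)
        next
          case xn: True
          have comp: "snd (Brep L' :: (nat,'a) rep) x (Suc n) = snd (Brep L') n (Suc n) * snd (Brep L') x n"
            by (rule is_repD(3)[OF is_rep_Brep[of "{0..Suc n}" L']]) (use xn in auto)
          have Bxn: "snd (Brep L' :: (nat,'a) rep) x n = snd (Brep L) x n" using xn by (simp add: snd_Brep cs_eq)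
          have cB: "snd (Brep L :: (nat,'a) rep) x n \<in> carrier_mat s (length (cs L x))" by (simp add: snd_Brep s_def cn_def)
          have cMxn: "snd M x n \<in> carrier_mat (fst M n) (fst M x)" by (rule is_repD(1)[OF M]) (use xn in auto)
          have cUn: "Uih n \<in> carrier_mat s s" using Uhc(2)[of n] by (simp add: s_def cn_def)
          have cpn: "\<phi> n \<in> carrier_mat s (fst M n)" using pc[of n] by (simp add: s_def cn_def)
          have cC: "canon d s zs \<in> carrier_mat d s" by simp
          note c = Uhc(2)[of x] pc[OF xn] cB cMxn cUn cpn cC Mn psin Gc Uc Uic
          note dd = c[THEN carrier_matD(1)] c[THEN carrier_matD(2)]
          have "canon d s zs * snd (Brep L) x n * (Uih x * \<phi> x) = canon d s zs * ((snd (Brep L) x n * Uih x) * \<phi> x)"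
            using dd by (simp add: assoc_dims del: assoc_mult_mat)
          also have "\<dots> = canon d s zs * ((Uih n * snd (Brep L) x n) * \<phi> x)" unfolding Uih_nat[OF xn le_refl] ..
          also have "\<dots> = canon d s zs * Uih n * (snd (Brep L) x n * \<phi> x)" using dd by (simp add: assoc_dims del: assoc_mult_mat)
          also have "\<dots> = canon d s zs * Ui * (\<phi> n * snd M x n)" unfolding Uih_n using nat[of x n] xn by simp
          also have "canon d s zs * Ui = G * snd M n (Suc n) * \<psi> n"
          proof -
            have "canon d s zs * Ui = G * A * (U * Ui)" unfolding red[symmetric] A_def using dd by (simp add: assoc_dims del: assoc_mult_mat)
            also have "\<dots> = G * A" using UUi Gc Ac by simp
            finally show ?thesis unfolding A_def using dd by (simp add: assoc_dims del: assoc_mult_mat)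
          qed
          also have "G * snd M n (Suc n) * \<psi> n * (\<phi> n * snd M x n) = G * snd M n (Suc n) * (\<psi> n * \<phi> n) * snd M x n"
            using dd by (simp add: assoc_dims del: assoc_mult_mat)
          also have "\<dots> = G * (snd M n (Suc n) * snd M x n)" using qp'[of n] dd Mn Gc cMxn by (simp add: assoc_dims del: assoc_mult_mat)
          also have "snd M n (Suc n) * snd M x n = snd M x (Suc n)"
            by (rule is_repD(3)[OF M, symmetric]) (use xn in auto)
          finally show ?thesis unfolding \<phi>'_def comp Bxn canonB yS using xn by simp
        qed
      qed
    qed
  qed
qed


theorem structure_thm:
  fixes M :: "(nat,'a::field) rep"
  shows "is_rep {0..n} (\<le>) M \<Longrightarrow> \<exists>L. good L n \<and> rep_iso {0..n} (\<le>) M (Brep L)"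
proof (induct n arbitrary: M)
  case 0
  define L where "L = replicate (fst M 0) (0::nat, 0::nat)"
  have csL: "cs L 0 = [0..<fst M 0]"
  proof -
    have "filter (alive L 0) [0..<length L] = [0..<length L]" by (rule filter_True) (auto simp: alive_def L_def)
    thus ?thesis by (simp add: cs_def L_def)
  qed
  have good: "good L 0" by (simp add: good_def L_def)
  have "rep_iso {0..0} (\<le>) M (Brep L)"
  proof (rule data_eq_iso[OF 0])
    fix x assume "x \<in> {0..(0::nat)}" thus "fst M x = fst (Brep L :: (nat,'a) rep) x" using csL by (simp add: fst_Brep)
  next
    fix x y :: nat assume "x \<in> {0..0}" "y \<in> {0..0}" "x \<le> y"
    hence xy: "x = 0" "y = 0" by auto
    have "snd M 0 0 = 1\<^sub>m (fst M 0)" by (rule is_repD(2)[OF 0]) auto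
    thus "snd M x y = snd (Brep L) x y" using csL xy by (simp add: snd_Brep Mt_one)
  qed
  thus ?case using good by blast
next
  case (Suc n)
  have "is_rep {0..n} (\<le>) M" by (rule is_rep_mono[OF Suc.prems]) auto
  from Suc.hyps[OF this] obtain L where "good L n" "rep_iso {0..n} (\<le>) M (Brep L)" by blast
  thus ?case by (intro structure_step[OF Suc.prems])
qed

theorem iso_of_rk:
  fixes M N :: "(nat,'a::field) rep"
  assumes M: "is_rep {0..n} (\<le>) M" and N: "is_rep {0..n} (\<le>) N"
    and r: "\<And>i j. i \<le> j \<Longrightarrow> j \<le> n \<Longrightarrow> rk M i j = rk N i j"
  shows "rep_iso {0..n} (\<le>) M N"
proof -
  obtain L where gL: "good L n" and iL: "rep_iso {0..n} (\<le>) M (Brep L)" using structure_thm[OF M] by blast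
  obtain L' where gL': "good L' n" and iL': "rep_iso {0..n} (\<le>) N (Brep L')" using structure_thm[OF N] by blast
  have "cnt L i j = cnt L' i j" if ij: "i \<le> j" "j \<le> n" for i j
  proof -
    have "rk M i j = rk (Brep L :: (nat,'a) rep) i j" by (rule rk_iso[OF iL M is_rep_Brep]) (use ij in auto)
    moreover have "rk N i j = rk (Brep L' :: (nat,'a) rep) i j" by (rule rk_iso[OF iL' N is_rep_Brep]) (use ij in auto)
    moreover have "rk (Brep L :: (nat,'a) rep) i j = cnt L i j" by (rule rk_Brep[OF ij(1)])
    moreover have "rk (Brep L' :: (nat,'a) rep) i j = cnt L' i j" by (rule rk_Brep[OF ij(1)])
    ultimately show ?thesis using r[OF ij] by simp
  qed
  hence "mset L = mset L'" by (intro cnt_mset[OF gL gL'])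
  hence b: "rep_iso {0..n} (\<le>) (Brep L :: (nat,'a) rep) (Brep L')" by (rule Brep_perm_iso)
  have "rep_iso {0..n} (\<le>) M (Brep L')" by (rule rep_iso_trans[OF iL b M is_rep_Brep is_rep_Brep])
  moreover have "rep_iso {0..n} (\<le>) (Brep L') N" by (rule rep_iso_sym[OF iL' N is_rep_Brep])
  ultimately show ?thesis by (rule rep_iso_trans[OF _ _ M is_rep_Brep N])
qed



lemma is_rep_J: "is_rep (P :: nat set) (\<le>) (J a b :: (nat,'a::field) rep)"
  unfolding is_rep_def
proof (intro conjI ballI impI)
  fix i j :: nat assume "i \<le> j"
  show "snd (J a b :: (nat,'a) rep) i j \<in> carrier_mat (fst (J a b :: (nat,'a) rep) j) (fst (J a b :: (nat,'a) rep) i)"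
    by (simp add: J_def)
next
  fix i :: nat
  show "snd (J a b :: (nat,'a) rep) i i = 1\<^sub>m (fst (J a b :: (nat,'a) rep) i)"
    by (auto simp: J_def intro!: eq_matI)
next
  fix i j k :: nat assume ij: "i \<le> j" and jk: "j \<le> k"
  show "snd (J a b :: (nat,'a) rep) i k = snd (J a b) j k * snd (J a b) i j"
  proof (cases "a \<le> i \<and> k \<le> b")
    case True thus ?thesis using ij jk by (simp add: J_def)
  next
    case False
    show ?thesis
    proof (cases "a \<le> i \<and> j \<le> b")
      case True
      hence "\<not> (a \<le> j \<and> k \<le> b)" using False by auto
      thus ?thesis using False True ij jk by (simp add: J_def)
    next
      case F2: False
      have c: "snd (J a b :: (nat,'a) rep) j k \<in> carrier_mat (fst (J a b :: (nat,'a) rep) k) (fst (J a b :: (nat,'a) rep) j)"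
        by (simp add: J_def)
      have "snd (J a b :: (nat,'a) rep) i j = 0\<^sub>m (fst (J a b :: (nat,'a) rep) j) (fst (J a b :: (nat,'a) rep) i)"
        using F2 ij by (auto simp: J_def)
      moreover have "snd (J a b :: (nat,'a) rep) i k = 0\<^sub>m (fst (J a b :: (nat,'a) rep) k) (fst (J a b :: (nat,'a) rep) i)"
        using False by (auto simp: J_def)
      ultimately show ?thesis using c by simp
    qed
  qed
qed

lemma is_rep_S: "is_rep (P :: nat set) (\<le>) (S_rep :: (nat,'a::field) rep)"
  unfolding is_rep_def S_rep_def by auto

lemma gr_eq_of_agree:
  assumes M: "is_rep P ord M" and K: "is_rep P ord K" and f: "\<And>x. x \<in> P \<Longrightarrow> fst M x = fst N x"
    and s: "\<And>x y. x \<in> P \<Longrightarrow> y \<in> P \<Longrightarrow> ord x y \<Longrightarrow> snd M x y = snd N x y"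
  shows "gr_eq P ord (M, K) (N, K)"
  unfolding gr_eq_def
proof (intro exI conjI)
  show "is_rep P ord zero_rep" by (rule is_rep_zero)
  show "rep_iso P ord (dsum (dsum (fst (M, K)) (snd (N, K))) zero_rep) (dsum (dsum (fst (N, K)) (snd (M, K))) zero_rep)"
    by (rule data_eq_iso) (auto simp: snd_dsum fst_dsum f s intro!: is_rep_dsum M K is_rep_zero)
qed

lemma dsum_interchange:
  assumes A: "is_rep P ord A" and B: "is_rep P ord B" and C: "is_rep P ord C" and D: "is_rep P ord D"
  shows "rep_iso P ord (dsum (dsum A B) (dsum C D)) (dsum (dsum A C) (dsum B D))"
proof -
  note r = is_rep_dsum A B C D
  have i1: "rep_iso P ord (dsum (dsum A B) (dsum C D)) (dsum A (dsum B (dsum C D)))"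
    by (rule dsum_assoc) (intro r is_rep_dsum)+
  have i2: "rep_iso P ord (dsum B (dsum C D)) (dsum (dsum B C) D)"
    by (rule rep_iso_sym[OF dsum_assoc]) (intro r is_rep_dsum)+
  have i3: "rep_iso P ord (dsum (dsum B C) D) (dsum (dsum C B) D)"
    by (rule dsum_cong[OF dsum_comm rep_iso_refl]) (intro r is_rep_dsum)+
  have i4: "rep_iso P ord (dsum (dsum C B) D) (dsum C (dsum B D))"
    by (rule dsum_assoc) (intro r is_rep_dsum)+
  have i5: "rep_iso P ord (dsum A (dsum C (dsum B D))) (dsum (dsum A C) (dsum B D))"
    by (rule rep_iso_sym[OF dsum_assoc]) (intro r is_rep_dsum)+
  have i234: "rep_iso P ord (dsum B (dsum C D)) (dsum C (dsum B D))"
    by (rule rep_iso_trans[OF rep_iso_trans[OF i2 i3] i4]) (intro r is_rep_dsum)+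
  have "rep_iso P ord (dsum A (dsum B (dsum C D))) (dsum A (dsum C (dsum B D)))"
    by (rule dsum_cong[OF rep_iso_refl i234]) (intro r is_rep_dsum)+
  thus ?thesis by (rule rep_iso_trans[OF i1 rep_iso_trans[OF _ i5]]) (intro r is_rep_dsum)+
qed


lemma gr_eq_refl:
  assumes "is_grel P ord x"
  shows "gr_eq P ord x x"
  unfolding gr_eq_def using assms
  by (intro exI[of _ zero_rep] conjI is_rep_zero rep_iso_refl) (auto simp: is_grel_def intro!: is_rep_dsum is_rep_zero)

lemma gr_eq_add:
  assumes e1: "gr_eq P ord x y" and e2: "gr_eq P ord x' y'"
    and gx: "is_grel P ord x" and gy: "is_grel P ord y" and gx': "is_grel P ord x'" and gy': "is_grel P ord y'"
  shows "gr_eq P ord (gr_add x x') (gr_add y y')"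
proof -
  obtain X where X: "is_rep P ord X" and i: "rep_iso P ord (dsum (dsum (fst x) (snd y)) X) (dsum (dsum (fst y) (snd x)) X)"
    using e1 unfolding gr_eq_def by blast
  obtain X' where X': "is_rep P ord X'" and i': "rep_iso P ord (dsum (dsum (fst x') (snd y')) X') (dsum (dsum (fst y') (snd x')) X')"
    using e2 unfolding gr_eq_def by blast
  note r = X X' gx[unfolded is_grel_def] gy[unfolded is_grel_def] gx'[unfolded is_grel_def] gy'[unfolded is_grel_def]
  note rr = X X' conjunct1[OF r(3)] conjunct2[OF r(3)] conjunct1[OF r(4)] conjunct2[OF r(4)]
     conjunct1[OF r(5)] conjunct2[OF r(5)] conjunct1[OF r(6)] conjunct2[OF r(6)]
  have s1: "rep_iso P ord (dsum (dsum (dsum (fst x) (fst x')) (dsum (snd y) (snd y'))) (dsum X X'))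
     (dsum (dsum (dsum (fst x) (snd y)) (dsum (fst x') (snd y'))) (dsum X X'))"
    by (rule dsum_cong[OF dsum_interchange rep_iso_refl]) (intro is_rep_dsum rr)+
  have s2: "rep_iso P ord (dsum (dsum (dsum (fst x) (snd y)) (dsum (fst x') (snd y'))) (dsum X X'))
     (dsum (dsum (dsum (fst x) (snd y)) X) (dsum (dsum (fst x') (snd y')) X'))"
    by (rule dsum_interchange) (intro is_rep_dsum rr)+
  have s3: "rep_iso P ord (dsum (dsum (dsum (fst x) (snd y)) X) (dsum (dsum (fst x') (snd y')) X'))
     (dsum (dsum (dsum (fst y) (snd x)) X) (dsum (dsum (fst y') (snd x')) X'))"
    by (rule dsum_cong[OF i i']) (intro is_rep_dsum rr)+
  have s4: "rep_iso P ord (dsum (dsum (dsum (fst y) (snd x)) X) (dsum (dsum (fst y') (snd x')) X'))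
     (dsum (dsum (dsum (fst y) (snd x)) (dsum (fst y') (snd x'))) (dsum X X'))"
    by (rule dsum_interchange) (intro is_rep_dsum rr)+
  have s5: "rep_iso P ord (dsum (dsum (dsum (fst y) (snd x)) (dsum (fst y') (snd x'))) (dsum X X'))
     (dsum (dsum (dsum (fst y) (fst y')) (dsum (snd x) (snd x'))) (dsum X X'))"
    by (rule dsum_cong[OF dsum_interchange rep_iso_refl]) (intro is_rep_dsum rr)+
  have "rep_iso P ord (dsum (dsum (dsum (fst x) (fst x')) (dsum (snd y) (snd y'))) (dsum X X'))
     (dsum (dsum (dsum (fst y) (fst y')) (dsum (snd x) (snd x'))) (dsum X X'))"
    by (rule rep_iso_trans[OF s1 rep_iso_trans[OF s2 rep_iso_trans[OF s3 rep_iso_trans[OF s4 s5]]]])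
       (intro is_rep_dsum rr)+
  thus ?thesis unfolding gr_eq_def gr_add_def using X X' by (intro exI[of _ "dsum X X'"] conjI is_rep_dsum) simp_all
qed

lemma gr_eq_swap:
  assumes e: "gr_eq P ord x y" and gx: "is_grel P ord x" and gy: "is_grel P ord y"
  shows "gr_eq P ord (snd x, fst x) (snd y, fst y)"
proof -
  obtain X where X: "is_rep P ord X" and i: "rep_iso P ord (dsum (dsum (fst x) (snd y)) X) (dsum (dsum (fst y) (snd x)) X)"
    using e unfolding gr_eq_def by blast
  note r = X gx[unfolded is_grel_def] gy[unfolded is_grel_def]
  note rr = X conjunct1[OF r(2)] conjunct2[OF r(2)] conjunct1[OF r(3)] conjunct2[OF r(3)]
  have s1: "rep_iso P ord (dsum (dsum (snd x) (fst y)) X) (dsum (dsum (fst y) (snd x)) X)"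
    by (rule dsum_cong[OF dsum_comm rep_iso_refl]) (intro is_rep_dsum rr)+
  have s2: "rep_iso P ord (dsum (dsum (fst y) (snd x)) X) (dsum (dsum (fst x) (snd y)) X)"
    by (rule rep_iso_sym[OF i]) (intro is_rep_dsum rr)+
  have s3: "rep_iso P ord (dsum (dsum (fst x) (snd y)) X) (dsum (dsum (snd y) (fst x)) X)"
    by (rule dsum_cong[OF dsum_comm rep_iso_refl]) (intro is_rep_dsum rr)+
  have "rep_iso P ord (dsum (dsum (snd x) (fst y)) X) (dsum (dsum (snd y) (fst x)) X)"
    by (rule rep_iso_trans[OF s1 rep_iso_trans[OF s2 s3]]) (intro is_rep_dsum rr)+
  thus ?thesis unfolding gr_eq_def using X by (intro exI[of _ X]) simp
qed

lemma gr_eq_pow: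
  assumes e: "gr_eq P ord x y" and gx: "is_grel P ord x" and gy: "is_grel P ord y"
  shows "gr_eq P ord (rep_pow (fst x) k, rep_pow (snd x) k) (rep_pow (fst y) k, rep_pow (snd y) k)"
proof (induct k)
  case 0
  show ?case by (simp, rule gr_eq_refl) (simp add: is_grel_def is_rep_zero)
next
  case (Suc k)
  have g: "is_grel P ord (rep_pow (fst z) k, rep_pow (snd z) k)" if "is_grel P ord z" for z
    using that by (simp add: is_grel_def is_rep_pow)
  have "gr_eq P ord (gr_add x (rep_pow (fst x) k, rep_pow (snd x) k)) (gr_add y (rep_pow (fst y) k, rep_pow (snd y) k))"
    by (rule gr_eq_add[OF e Suc gx gy g[OF gx] g[OF gy]])
  thus ?case by (simp add: gr_add_def)
qed

lemma gr_eq_smul: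
  assumes e: "gr_eq P ord x y" and gx: "is_grel P ord x" and gy: "is_grel P ord y"
  shows "gr_eq P ord (gr_smul a x) (gr_smul a y)"
proof (cases "a \<ge> 0")
  case True thus ?thesis using gr_eq_pow[OF e gx gy] by (simp add: gr_smul_def)
next
  case False
  have g: "is_grel P ord (rep_pow (fst z) k, rep_pow (snd z) k)" if "is_grel P ord z" for z k
    using that by (simp add: is_grel_def is_rep_pow)
  show ?thesis using False gr_eq_swap[OF gr_eq_pow[OF e gx gy] g[OF gx] g[OF gy]] by (simp add: gr_smul_def)
qed

lemma gr_pull_add: "gr_pull F (gr_add x y) = gr_add (gr_pull F x) (gr_pull F y)"
  by (simp add: gr_pull_def gr_add_def pull_dsum)

lemma gr_pull_smul: "gr_pull F (gr_smul a x) = gr_smul a (gr_pull F x)"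
  by (simp add: gr_pull_def gr_smul_def pull_pow)

lemma is_grel_pull:
  assumes "is_grel P ord x" "\<And>z. z \<in> Q \<Longrightarrow> F z \<in> P" "\<And>z w. z \<in> Q \<Longrightarrow> w \<in> Q \<Longrightarrow> ord' z w \<Longrightarrow> ord (F z) (F w)"
  shows "is_grel Q ord' (gr_pull F x)"
  using assms unfolding is_grel_def gr_pull_def by (auto intro: is_rep_pull)

lemma rel1_d0: "p \<in> rel1 n \<Longrightarrow> d0 p \<in> poset_n n" and rel1_d1: "p \<in> rel1 n \<Longrightarrow> d1 p \<in> poset_n n"
  by (auto simp: rel1_def poset_n_def d0_def d1_def)

lemma E_le_mono: "E_le p q \<Longrightarrow> d0 p \<le> d0 q" "E_le p q \<Longrightarrow> d1 p \<le> d1 q"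
  by (auto simp: E_le_def d0_def d1_def)

lemma G_le_E_le: "p \<in> rel1 n \<Longrightarrow> q \<in> rel1 n \<Longrightarrow> G_le p q \<Longrightarrow> E_le p q"
  by (auto simp: G_le_def E_le_def rel1_def)

lemma grel_pull_E:
  assumes "is_grel (poset_n n) (\<le>) x"
  shows "is_grel (rel1 n) E_le (gr_pull d0 x)" "is_grel (rel1 n) E_le (gr_pull d1 x)"
  by (rule is_grel_pull[OF assms], auto simp: rel1_d0 rel1_d1 E_le_mono)+

lemma grel_pull_G:
  assumes "is_grel (poset_n n) (\<le>) x"
  shows "is_grel (rel1 n) G_le (gr_pull d0 x)" "is_grel (rel1 n) G_le (gr_pull d1 x)"
  by (rule is_grel_pull[OF assms], auto simp: rel1_d0 rel1_d1 E_le_mono G_le_E_le)+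

lemma E0_add: "x \<in> E0 n \<Longrightarrow> y \<in> E0 n \<Longrightarrow> gr_add x y \<in> E0 n"
  by (auto simp: E0_def gr_pull_add intro!: gr_eq_add is_grel_add grel_pull_E)

lemma E0_smul: "x \<in> E0 n \<Longrightarrow> gr_smul a x \<in> E0 n"
  by (auto simp: E0_def gr_pull_smul intro!: gr_eq_smul is_grel_smul grel_pull_E)

lemma E0_sub_G0: "E0 n \<subseteq> G0 n"
proof
  fix x assume "x \<in> E0 n"
  hence gx: "is_grel (poset_n n) (\<le>) x" and e: "gr_eq (rel1 n) E_le (gr_pull d0 x) (gr_pull d1 x)" by (auto simp: E0_def)
  obtain X where X: "is_rep (rel1 n) E_le X" and i: "rep_iso (rel1 n) E_le (dsum (dsum (fst (gr_pull d0 x)) (snd (gr_pull d1 x))) X)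
      (dsum (dsum (fst (gr_pull d1 x)) (snd (gr_pull d0 x))) X)" using e unfolding gr_eq_def by blast
  have "gr_eq (rel1 n) G_le (gr_pull d0 x) (gr_pull d1 x)"
    unfolding gr_eq_def
    by (intro exI[of _ X] conjI is_rep_mono[OF X] rep_iso_mono[OF i]) (auto simp: G_le_E_le)
  thus "x \<in> G0 n" using gx by (simp add: G0_def)
qed


definition agree :: "'p set \<Rightarrow> ('p \<Rightarrow> 'p \<Rightarrow> bool) \<Rightarrow> ('p,'a::field) rep \<Rightarrow> ('p,'a) rep \<Rightarrow> bool" where
  "agree P ord M N \<longleftrightarrow> (\<forall>x\<in>P. fst M x = fst N x) \<and> (\<forall>x\<in>P. \<forall>y\<in>P. ord x y \<longrightarrow> snd M x y = snd N x y)"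

lemma agree_refl: "agree P ord M M" by (simp add: agree_def)

lemma agree_dsum: "agree P ord M M' \<Longrightarrow> agree P ord N N' \<Longrightarrow> agree P ord (dsum M N) (dsum M' N')"
  unfolding agree_def by (simp add: snd_dsum fst_dsum)

lemma agree_iso: "is_rep P ord M \<Longrightarrow> agree P ord M N \<Longrightarrow> rep_iso P ord M N"
  unfolding agree_def by (rule data_eq_iso) auto

lemma gr_pull_of: "gr_pull F (gr_of M) = (pull F M, zero_rep)"
  by (simp add: gr_pull_def gr_of_def pull_zero)

lemma is_rep_pullE: "is_rep (poset_n n) (\<le>) M \<Longrightarrow> is_rep (rel1 n) E_le (pull d0 M) \<and> is_rep (rel1 n) E_le (pull d1 M)"
  by (auto intro!: is_rep_pull simp: rel1_d0 rel1_d1 E_le_mono)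

lemma is_rep_J_n: "is_rep (poset_n n) (\<le>) (J a b :: (nat,'a::field) rep)" by (rule is_rep_J)

lemma J_E0: "(gr_of (J 0 n) :: (nat,'a::field) grel) \<in> E0 n"
  unfolding E0_def
proof (intro CollectI conjI)
  show "is_grel (poset_n n) (\<le>) (gr_of (J 0 n) :: (nat,'a) grel)" by (rule is_grel_of[OF is_rep_J])
  show "gr_eq (rel1 n) E_le (gr_pull d0 (gr_of (J 0 n) :: (nat,'a) grel)) (gr_pull d1 (gr_of (J 0 n)))"
    unfolding gr_pull_of
    by (rule gr_eq_of_agree[OF conjunct1[OF is_rep_pullE[OF is_rep_J_n]] is_rep_zero])
       (auto simp: J_def pull_def rel1_def E_le_def d0_def d1_def)
qed

lemma S_G0: "(gr_of S_rep :: (nat,'a::field) grel) \<in> G0 n"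
  unfolding G0_def
proof (intro CollectI conjI)
  show "is_grel (poset_n n) (\<le>) (gr_of S_rep :: (nat,'a) grel)" by (rule is_grel_of[OF is_rep_S])
  have r: "is_rep (rel1 n) G_le (pull d0 (S_rep :: (nat,'a) rep))"
    by (rule is_rep_pull[OF is_rep_S]) (auto simp: rel1_d0 E_le_mono G_le_E_le)
  show "gr_eq (rel1 n) G_le (gr_pull d0 (gr_of S_rep :: (nat,'a) grel)) (gr_pull d1 (gr_of S_rep))"
    unfolding gr_pull_of
  proof (rule gr_eq_of_agree[OF r is_rep_zero])
    fix x assume "x \<in> rel1 n" thus "fst (pull d0 (S_rep :: (nat,'a) rep)) x = fst (pull d1 S_rep) x" by (simp add: pull_def S_rep_def)
  next
    fix x y assume x: "x \<in> rel1 n" and y: "y \<in> rel1 n" and o: "G_le x y"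
    have "(snd x = snd y) = (fst x = fst y)"
      using x y o by (cases x, cases y) (auto simp: G_le_def rel1_def)
    thus "snd (pull d0 (S_rep :: (nat,'a) rep)) x y = snd (pull d1 S_rep) x y" by (simp add: pull_def S_rep_def d0_def d1_def)
  qed
qed

lemma T_el_eq: "T_el n = (dsum (dsum (J 0 (n-1)) (J 1 n)) (dsum zero_rep zero_rep), dsum (dsum zero_rep zero_rep) (dsum (J 1 (n-1)) zero_rep))"
  by (simp add: T_el_def gr_add_def gr_smul_def gr_of_def)

lemma drop_ZZ: "is_rep P ord Q \<Longrightarrow> rep_iso P ord (dsum Q (dsum zero_rep zero_rep)) Q"
  by (rule rep_iso_trans[OF dsum_cong[OF rep_iso_refl dsum_zero_left] dsum_zero_right])
     (intro is_rep_dsum is_rep_zero | assumption)+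

lemma drop_ZZ_left: "is_rep P ord Q \<Longrightarrow> rep_iso P ord (dsum (dsum zero_rep zero_rep) (dsum Q zero_rep)) Q"
  by (rule rep_iso_trans[OF dsum_cong[OF dsum_zero_left rep_iso_refl] rep_iso_trans[OF dsum_zero_left dsum_zero_right]])
     (intro is_rep_dsum is_rep_zero | assumption)+

lemma T_shape:
  assumes a: "is_rep P ord a" and b: "is_rep P ord b" and c: "is_rep P ord c"
  shows "rep_iso P ord (dsum (dsum (dsum (dsum c a) (dsum zero_rep zero_rep)) (dsum (dsum zero_rep zero_rep) (dsum b zero_rep))) zero_rep)
                       (dsum (dsum (dsum (dsum a b) (dsum zero_rep zero_rep)) (dsum (dsum zero_rep zero_rep) (dsum c zero_rep))) zero_rep)"
proof -
  note r = a b c is_rep_zero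
  have l: "rep_iso P ord (dsum (dsum (dsum (dsum c a) (dsum zero_rep zero_rep)) (dsum (dsum zero_rep zero_rep) (dsum b zero_rep))) zero_rep)
     (dsum (dsum c a) b)"
    by (rule rep_iso_trans[OF dsum_zero_right dsum_cong[OF drop_ZZ drop_ZZ_left]]) (intro is_rep_dsum r)+
  have r1: "rep_iso P ord (dsum (dsum (dsum (dsum a b) (dsum zero_rep zero_rep)) (dsum (dsum zero_rep zero_rep) (dsum c zero_rep))) zero_rep)
     (dsum (dsum a b) c)"
    by (rule rep_iso_trans[OF dsum_zero_right dsum_cong[OF drop_ZZ drop_ZZ_left]]) (intro is_rep_dsum r)+
  have r2: "rep_iso P ord (dsum (dsum a b) c) (dsum (dsum c a) b)"
    by (rule rep_iso_trans[OF dsum_comm rep_iso_sym[OF dsum_assoc]]) (intro is_rep_dsum r)+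
  have "rep_iso P ord (dsum (dsum (dsum (dsum a b) (dsum zero_rep zero_rep)) (dsum (dsum zero_rep zero_rep) (dsum c zero_rep))) zero_rep)
     (dsum (dsum c a) b)" by (rule rep_iso_trans[OF r1 r2]) (intro is_rep_dsum r)+
  thus ?thesis by (rule rep_iso_trans[OF l rep_iso_sym]) (intro is_rep_dsum r)+
qed

lemma T_E0:
  assumes n: "1 \<le> n"
  shows "(T_el n :: (nat,'a::field) grel) \<in> E0 n"
  unfolding E0_def
proof (intro CollectI conjI)
  show "is_grel (poset_n n) (\<le>) (T_el n :: (nat,'a) grel)"
    unfolding T_el_eq is_grel_def by (simp add: is_rep_dsum is_rep_J is_rep_zero)
  let ?Z = "zero_rep :: (nat \<times> nat, 'a) rep"
  let ?A0 = "pull d0 (J 0 (n-1) :: (nat,'a) rep)" and ?B0 = "pull d0 (J 1 n :: (nat,'a) rep)" and ?C0 = "pull d0 (J 1 (n-1) :: (nat,'a) rep)"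
  let ?A1 = "pull d1 (J 0 (n-1) :: (nat,'a) rep)" and ?B1 = "pull d1 (J 1 n :: (nat,'a) rep)" and ?C1 = "pull d1 (J 1 (n-1) :: (nat,'a) rep)"
  have p0: "gr_pull d0 (T_el n :: (nat,'a) grel) = (dsum (dsum ?A0 ?B0) (dsum ?Z ?Z), dsum (dsum ?Z ?Z) (dsum ?C0 ?Z))"
    unfolding T_el_eq by (simp add: gr_pull_def pull_dsum pull_zero)
  have p1: "gr_pull d1 (T_el n :: (nat,'a) grel) = (dsum (dsum ?A1 ?B1) (dsum ?Z ?Z), dsum (dsum ?Z ?Z) (dsum ?C1 ?Z))"
    unfolding T_el_eq by (simp add: gr_pull_def pull_dsum pull_zero)
  have ag1: "agree (rel1 n) E_le ?A0 ?C0" using n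
    by (auto simp: agree_def pull_def J_def rel1_def E_le_def d0_def)
  have ag2: "agree (rel1 n) E_le ?B0 ?A1" using n
    by (auto simp: agree_def pull_def J_def rel1_def E_le_def d0_def d1_def)
  have ag3: "agree (rel1 n) E_le ?C1 ?B1" using n
    by (auto simp: agree_def pull_def J_def rel1_def E_le_def d1_def)
  have rA0: "is_rep (rel1 n) E_le ?A0" and rB0: "is_rep (rel1 n) E_le ?B0" and rC1: "is_rep (rel1 n) E_le ?C1"
    and rA1: "is_rep (rel1 n) E_le ?A1" and rB1: "is_rep (rel1 n) E_le ?B1" and rC0: "is_rep (rel1 n) E_le ?C0"
    using is_rep_pullE[OF is_rep_J_n] by blast+
  note r = rA0 rB0 rC1 rA1 rB1 rC0 is_rep_zero
  have i1: "rep_iso (rel1 n) E_le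
     (dsum (dsum (dsum (dsum ?A0 ?B0) (dsum ?Z ?Z)) (dsum (dsum ?Z ?Z) (dsum ?C1 ?Z))) ?Z)
     (dsum (dsum (dsum (dsum ?C0 ?A1) (dsum ?Z ?Z)) (dsum (dsum ?Z ?Z) (dsum ?B1 ?Z))) ?Z)"
    by (rule agree_iso) (intro is_rep_dsum r, intro agree_dsum agree_refl ag1 ag2 ag3)
  have i2: "rep_iso (rel1 n) E_le
     (dsum (dsum (dsum (dsum ?C0 ?A1) (dsum ?Z ?Z)) (dsum (dsum ?Z ?Z) (dsum ?B1 ?Z))) ?Z)
     (dsum (dsum (dsum (dsum ?A1 ?B1) (dsum ?Z ?Z)) (dsum (dsum ?Z ?Z) (dsum ?C0 ?Z))) ?Z)"
    by (rule T_shape[OF rA1 rB1 rC0])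
  have "rep_iso (rel1 n) E_le
     (dsum (dsum (dsum (dsum ?A0 ?B0) (dsum ?Z ?Z)) (dsum (dsum ?Z ?Z) (dsum ?C1 ?Z))) ?Z)
     (dsum (dsum (dsum (dsum ?A1 ?B1) (dsum ?Z ?Z)) (dsum (dsum ?Z ?Z) (dsum ?C0 ?Z))) ?Z)"
    by (rule rep_iso_trans[OF i1 i2]) (intro is_rep_dsum r)+
  thus "gr_eq (rel1 n) E_le (gr_pull d0 (T_el n :: (nat,'a) grel)) (gr_pull d1 (T_el n))"
    unfolding p0 p1 gr_eq_def by (intro exI[of _ ?Z] conjI is_rep_zero) simp
qed



lemma rk_J: "i \<le> j \<Longrightarrow> rk (J a b :: (nat,'a::field) rep) i j = (if a \<le> i \<and> j \<le> b then 1 else 0)"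
  by (cases "a \<le> i \<and> j \<le> b") (auto simp: rk_def J_def mrank_one mrank_zero)

lemma rk_S: "rk (S_rep :: (nat,'a::field) rep) i j = (if i = j then 1 else 0)"
  by (cases "i = j") (auto simp: rk_def S_rep_def mrank_one mrank_zero)

lemma R_J: "i \<le> j \<Longrightarrow> R (gr_of (J a b) :: (nat,'a::field) grel) i j = (if a \<le> i \<and> j \<le> b then 1 else 0)"
  by (simp add: R_of rk_J)

lemma R_S: "R (gr_of S_rep :: (nat,'a::field) grel) i j = (if i = j then 1 else 0)"
  by (simp add: R_of rk_S)

lemma grel_J: "is_grel (poset_n n) (\<le>) (gr_of (J a b) :: (nat,'a::field) grel)" by (rule is_grel_of[OF is_rep_J])
lemma grel_S: "is_grel (poset_n n) (\<le>) (gr_of S_rep :: (nat,'a::field) grel)" by (rule is_grel_of[OF is_rep_S])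
lemma grel_T: "is_grel (poset_n n) (\<le>) (T_el m :: (nat,'a::field) grel)"
  unfolding T_el_def by (intro is_grel_add is_grel_smul grel_J)

lemma R_T:
  assumes n: "1 \<le> n" and ij: "i \<le> j" and jn: "j \<le> n"
  shows "R (T_el n :: (nat,'a::field) grel) i j = (if i = 0 \<and> j = n then 0 else 1)"
proof -
  have P: "i \<in> poset_n n" "j \<in> poset_n n" using ij jn by (auto simp: poset_n_def)
  note gA = grel_J[of n 0 "n-1", where 'a='a] and gB = grel_J[of n 1 n, where 'a='a] and gC = grel_J[of n 1 "n-1", where 'a='a]
  have "R (T_el n :: (nat,'a) grel) i j = R (gr_add (gr_of (J 0 (n-1))) (gr_of (J 1 n)) :: (nat,'a) grel) i j
     + R (gr_smul (-1) (gr_of (J 1 (n-1))) :: (nat,'a) grel) i j"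
    unfolding T_el_def by (rule R_add[OF is_grel_add[OF gA gB] is_grel_smul[OF gC] P ij])
  also have "\<dots> = R (gr_of (J 0 (n-1)) :: (nat,'a) grel) i j + R (gr_of (J 1 n) :: (nat,'a) grel) i j
     + (-1) * R (gr_of (J 1 (n-1)) :: (nat,'a) grel) i j"
    unfolding R_add[OF gA gB P ij] R_smul[OF gC P ij] by simp
  also have "\<dots> = (if i = 0 \<and> j = n then 0 else 1)" using ij jn n by (simp add: R_J) arith
  finally show ?thesis .
qed

lemma Gr_eq_n_iff:
  fixes x y :: "(nat,'a::field) grel"
  assumes gx: "is_grel (poset_n n) (\<le>) x" and gy: "is_grel (poset_n n) (\<le>) y"
  shows "Gr_eq_n n x y \<longleftrightarrow> (\<forall>i j. i \<le> j \<longrightarrow> j \<le> n \<longrightarrow> R x i j = R y i j)"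
proof
  assume "Gr_eq_n n x y"
  thus "\<forall>i j. i \<le> j \<longrightarrow> j \<le> n \<longrightarrow> R x i j = R y i j"
    unfolding Gr_eq_n_def using gr_eq_R[OF _ gx gy] by (auto simp: poset_n_def)
next
  assume h: "\<forall>i j. i \<le> j \<longrightarrow> j \<le> n \<longrightarrow> R x i j = R y i j"
  have r: "is_rep {0..n} (\<le>) (fst x)" "is_rep {0..n} (\<le>) (snd x)" "is_rep {0..n} (\<le>) (fst y)" "is_rep {0..n} (\<le>) (snd y)"
    using gx gy by (auto simp: is_grel_def poset_n_def)
  have "rep_iso {0..n} (\<le>) (dsum (dsum (fst x) (snd y)) zero_rep) (dsum (dsum (fst y) (snd x)) zero_rep)"
  proof (rule iso_of_rk)
    show "is_rep {0..n} (\<le>) (dsum (dsum (fst x) (snd y)) zero_rep)" by (intro is_rep_dsum r is_rep_zero)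
    show "is_rep {0..n} (\<le>) (dsum (dsum (fst y) (snd x)) zero_rep)" by (intro is_rep_dsum r is_rep_zero)
    fix i j :: nat assume ij: "i \<le> j" and jn: "j \<le> n"
    have P: "i \<in> {0..n}" "j \<in> {0..n}" using ij jn by auto
    have "R x i j = R y i j" using h ij jn by blast
    hence "rk (fst x) i j + rk (snd y) i j = rk (fst y) i j + rk (snd x) i j" unfolding R_def by linarith
    thus "rk (dsum (dsum (fst x) (snd y)) zero_rep) i j = rk (dsum (dsum (fst y) (snd x)) zero_rep) i j"
      by (simp add: rk_dsum[OF is_rep_dsum[OF r(1) r(4)] is_rep_zero P ij] rk_dsum[OF is_rep_dsum[OF r(3) r(2)] is_rep_zero P ij]
          rk_dsum[OF r(1) r(4) P ij] rk_dsum[OF r(3) r(2) P ij])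
  qed
  thus "Gr_eq_n n x y" unfolding Gr_eq_n_def gr_eq_def poset_n_def by (intro exI[of _ zero_rep] conjI is_rep_zero)
qed

lemma G0_key:
  assumes x: "x \<in> G0 n" and p: "p \<in> rel1 n" and q: "q \<in> rel1 n" and o: "G_le p q"
  shows "R x (snd p) (snd q) = R x (fst p) (fst q)"
proof -
  have gx: "is_grel (poset_n n) (\<le>) x" and e: "gr_eq (rel1 n) G_le (gr_pull d0 x) (gr_pull d1 x)" using x by (auto simp: G0_def)
  have "R (gr_pull d0 x) p q = R (gr_pull d1 x) p q" by (rule gr_eq_R[OF e grel_pull_G[OF gx] p q o])
  thus ?thesis by (simp add: R_pull d0_def d1_def)
qed

lemma G0_R:
  assumes x: "x \<in> G0 n" and n: "2 \<le> n"
  shows "\<And>i. i \<le> n \<Longrightarrow> R x i i = R x 0 0"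
    and "\<And>i j. i < j \<Longrightarrow> j \<le> n \<Longrightarrow> \<not> (i = 0 \<and> j = n) \<Longrightarrow> R x i j = R x 0 1"
proof -
  fix i assume i: "i \<le> n"
  show "R x i i = R x 0 0"
  proof (cases "i = 0")
    case False
    have "R x (snd (0::nat,i)) (snd (0::nat,i)) = R x (fst (0::nat,i)) (fst (0::nat,i))"
      by (rule G0_key[OF x, where p="(0,i)" and q="(0,i)"]) (use i False in \<open>auto simp: rel1_def G_le_def\<close>)
    thus ?thesis by simp
  qed simp
next
  have K: "R x j j' = R x i i'" if "i < j" "j \<le> i'" "i' < j'" "j' \<le> n" for i j i' j'
  proof -
    have "R x (snd (i,j)) (snd (i',j')) = R x (fst (i,j)) (fst (i',j'))"
      by (rule G0_key[OF x, where p="(i,j)" and q="(i',j')"]) (use that in \<open>auto simp: rel1_def G_le_def\<close>)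
    thus ?thesis by simp
  qed
  have A: "R x 0 a = R x 1 n" if "1 \<le> a" "a < n" for a using K[of 0 1 a n] that by simp
  fix i j assume ij: "i < j" and jn: "j \<le> n" and ne: "\<not> (i = 0 \<and> j = n)"
  have e01: "R x 0 1 = R x 1 n" using A[of 1] n by simp
  show "R x i j = R x 0 1"
  proof (cases "i = 0")
    case True
    thus ?thesis using A[of j] ij jn ne e01 by simp
  next
    case False
    have "R x i j = R x 0 i" using K[of 0 i i j] False ij jn by simp
    also have "\<dots> = R x 1 n" using A[of i] False ij jn by simp
    finally show ?thesis using e01 by simp
  qed
qed

lemma E0_R:
  assumes x: "x \<in> E0 n" and n: "2 \<le> n"
  shows "R x 0 1 = R x 0 0"
proof -
  have gx: "is_grel (poset_n n) (\<le>) x" and e: "gr_eq (rel1 n) E_le (gr_pull d0 x) (gr_pull d1 x)" using x by (auto simp: E0_def)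
  have "R (gr_pull d0 x) (0,1) (0,2) = R (gr_pull d1 x) (0,1) (0,2)"
    by (rule gr_eq_R[OF e grel_pull_E[OF gx]]) (use n in \<open>auto simp: rel1_def E_le_def\<close>)
  hence "R x 1 2 = R x 0 0" by (simp add: R_pull d0_def d1_def)
  moreover have "R x 1 2 = R x 0 1" using G0_R(2)[OF subsetD[OF E0_sub_G0 x] n, of 1 2] n by simp
  ultimately show ?thesis by simp
qed



lemma Pn: "i \<le> j \<Longrightarrow> j \<le> n \<Longrightarrow> i \<in> poset_n n \<and> j \<in> poset_n n" by (auto simp: poset_n_def)

lemma R_comb3:
  assumes n: "2 \<le> n" and ij: "i \<le> j" and jn: "j \<le> n"
  shows "R (gr_add (gr_add (gr_smul a (gr_of (J 0 n))) (gr_smul b (gr_of S_rep))) (gr_smul c (T_el n)) :: (nat,'a::field) grel) i j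
     = a + b * (if i = j then 1 else 0) + c * (if i = 0 \<and> j = n then 0 else 1)"
proof -
  note P = conjunct1[OF Pn[OF ij jn]] conjunct2[OF Pn[OF ij jn]]
  note gJ = grel_J[of n 0 n, where 'a='a] and gS = grel_S[of n, where 'a='a] and gT = grel_T[of n n, where 'a='a]
  show ?thesis
    unfolding R_add[OF is_grel_add[OF is_grel_smul[OF gJ] is_grel_smul[OF gS]] is_grel_smul[OF gT] P ij]
      R_add[OF is_grel_smul[OF gJ] is_grel_smul[OF gS] P ij] R_smul[OF gJ P ij] R_smul[OF gS P ij] R_smul[OF gT P ij]
    using n ij jn by (simp add: R_J R_S R_T)
qed

lemma R_comb2:
  assumes n: "2 \<le> n" and ij: "i \<le> j" and jn: "j \<le> n"
  shows "R (gr_add (gr_smul a (gr_of (J 0 n))) (gr_smul c (T_el n)) :: (nat,'a::field) grel) i j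
     = a + c * (if i = 0 \<and> j = n then 0 else 1)"
proof -
  note P = conjunct1[OF Pn[OF ij jn]] conjunct2[OF Pn[OF ij jn]]
  note gJ = grel_J[of n 0 n, where 'a='a] and gT = grel_T[of n n, where 'a='a]
  show ?thesis
    unfolding R_add[OF is_grel_smul[OF gJ] is_grel_smul[OF gT] P ij] R_smul[OF gJ P ij] R_smul[OF gT P ij]
    using n ij jn by (simp add: R_J R_T)
qed

lemma R_combS:
  assumes g: "is_grel (poset_n n) (\<le>) e" and ij: "i \<le> j" and jn: "j \<le> n"
  shows "R (gr_add e (gr_smul a (gr_of S_rep)) :: (nat,'a::field) grel) i j = R e i j + a * (if i = j then 1 else 0)"
proof -
  note P = conjunct1[OF Pn[OF ij jn]] conjunct2[OF Pn[OF ij jn]]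
  note gS = grel_S[of n, where 'a='a]
  show ?thesis unfolding R_add[OF g is_grel_smul[OF gS] P ij] R_smul[OF gS P ij] by (simp add: R_S)
qed

lemma all_cong_helper:
  assumes "\<And>i j. i \<le> j \<Longrightarrow> j \<le> n \<Longrightarrow> f i j = g i j"
  shows "(\<forall>i j. i \<le> j \<longrightarrow> j \<le> (n::nat) \<longrightarrow> h i j = (f i j :: int)) = (\<forall>i j. i \<le> j \<longrightarrow> j \<le> n \<longrightarrow> h i j = g i j)"
  using assms by auto

theorem proposition5p2:
  fixes n :: nat
  assumes "n \<ge> 2"
  shows "let Jn = (gr_of (J 0 n) :: (nat,'a::field) grel);
             Sn = (gr_of S_rep :: (nat,'a) grel);
             Tn = (T_el n :: (nat,'a) grel)
         in {Jn, Sn, Tn} \<subseteq> G0 n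
          \<and> (\<forall>x\<in>G0 n. \<exists>!t::int\<times>int\<times>int.
               Gr_eq_n n x (gr_add (gr_add (gr_smul (fst t) Jn) (gr_smul (fst (snd t)) Sn))
                                   (gr_smul (snd (snd t)) Tn)))
          \<and> {Jn, Tn} \<subseteq> E0 n
          \<and> (\<forall>x\<in>E0 n. \<exists>!t::int\<times>int.
               Gr_eq_n n x (gr_add (gr_smul (fst t) Jn) (gr_smul (snd t) Tn)))
          \<and> E0 n \<subseteq> G0 n
          \<and> (\<forall>x\<in>G0 n. \<exists>!a::int. \<exists>e\<in>E0 n. Gr_eq_n n x (gr_add e (gr_smul a Sn)))"
proof -
  have n2: "2 \<le> n" using assms by simp
  have n1: "1 \<le> n" using assms by simp
  have JE: "(gr_of (J 0 n) :: (nat,'a) grel) \<in> E0 n" by (rule J_E0)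
  have TE: "(T_el n :: (nat,'a) grel) \<in> E0 n" by (rule T_E0[OF n1])
  have SG: "(gr_of S_rep :: (nat,'a) grel) \<in> G0 n" by (rule S_G0)
  note EG = E0_sub_G0[of n, where 'a='a]
  note gJ = grel_J[of n 0 n, where 'a='a] and gS = grel_S[of n, where 'a='a] and gT = grel_T[of n n, where 'a='a]
  have gC3: "is_grel (poset_n n) (\<le>) (gr_add (gr_add (gr_smul a (gr_of (J 0 n))) (gr_smul b (gr_of S_rep))) (gr_smul c (T_el n)) :: (nat,'a) grel)" for a b c
    by (intro is_grel_add is_grel_smul gJ gS gT)
  have gC2: "is_grel (poset_n n) (\<le>) (gr_add (gr_smul a (gr_of (J 0 n))) (gr_smul c (T_el n)) :: (nat,'a) grel)" for a c
    by (intro is_grel_add is_grel_smul gJ gT)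
  have n0: "(0::nat) \<noteq> n" and n01: "\<not> ((0::nat) = 0 \<and> (1::nat) = n)" using n2 by auto
  have G3: "\<exists>!t::int\<times>int\<times>int. Gr_eq_n n x (gr_add (gr_add (gr_smul (fst t) (gr_of (J 0 n))) (gr_smul (fst (snd t)) (gr_of S_rep))) (gr_smul (snd (snd t)) (T_el n)))"
    if x: "x \<in> G0 n" for x :: "(nat,'a) grel"
  proof -
    have gx: "is_grel (poset_n n) (\<le>) x" using x by (simp add: G0_def)
    note diag = G0_R(1)[OF x n2] and off = G0_R(2)[OF x n2]
    have iff: "Gr_eq_n n x (gr_add (gr_add (gr_smul (fst t) (gr_of (J 0 n))) (gr_smul (fst (snd t)) (gr_of S_rep))) (gr_smul (snd (snd t)) (T_el n)))
       \<longleftrightarrow> (\<forall>i j. i \<le> j \<longrightarrow> j \<le> n \<longrightarrow> R x i j = fst t + fst (snd t) * (if i = j then 1 else 0) + snd (snd t) * (if i = 0 \<and> j = n then 0 else 1))"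
      for t :: "int\<times>int\<times>int"
      unfolding Gr_eq_n_iff[OF gx gC3] by (rule all_cong_helper) (rule R_comb3[OF n2])
    define t0 where "t0 = (R x 0 n, R x 0 0 - R x 0 1, R x 0 1 - R x 0 n)"
    show ?thesis
    proof (rule ex1I[of _ t0])
      show "Gr_eq_n n x (gr_add (gr_add (gr_smul (fst t0) (gr_of (J 0 n))) (gr_smul (fst (snd t0)) (gr_of S_rep))) (gr_smul (snd (snd t0)) (T_el n)))"
        unfolding iff
      proof (intro allI impI)
        fix i j :: nat assume ij: "i \<le> j" and jn: "j \<le> n"
        show "R x i j = fst t0 + fst (snd t0) * (if i = j then 1 else 0) + snd (snd t0) * (if i = 0 \<and> j = n then 0 else 1)"
        proof (cases "i = j")
          case True
          hence "(if i = 0 \<and> j = n then 0 else 1) = (1::int)" using n2 by auto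
          thus ?thesis using True diag[of i] jn by (simp add: t0_def)
        next
          case False
          hence ij': "i < j" using ij by simp
          show ?thesis
          proof (cases "i = 0 \<and> j = n")
            case True thus ?thesis using False by (simp add: t0_def)
          next
            case F2: False
            hence "(if i = 0 \<and> j = n then 0 else 1) = (1::int)" by simp
            thus ?thesis using False off[OF ij' jn F2] by (simp add: t0_def)
          qed
        qed
      qed
    next
      fix t :: "int\<times>int\<times>int"
      assume "Gr_eq_n n x (gr_add (gr_add (gr_smul (fst t) (gr_of (J 0 n))) (gr_smul (fst (snd t)) (gr_of S_rep))) (gr_smul (snd (snd t)) (T_el n)))"
      hence h: "\<And>i j. i \<le> j \<Longrightarrow> j \<le> n \<Longrightarrow> R x i j = fst t + fst (snd t) * (if i = j then 1 else 0) + snd (snd t) * (if i = 0 \<and> j = n then 0 else 1)"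
        unfolding iff by blast
      have e1: "R x 0 n = fst t" using h[of 0 n] n0 by simp
      have e2: "R x 0 1 = fst t + snd (snd t)" using h[of 0 1] n2 by simp
      have e3: "R x 0 0 = fst t + fst (snd t) + snd (snd t)" using h[of 0 0] n0 by simp
      show "t = t0" unfolding t0_def using e1 e2 e3 by (cases t) auto
    qed
  qed
  have E2: "\<exists>!t::int\<times>int. Gr_eq_n n x (gr_add (gr_smul (fst t) (gr_of (J 0 n))) (gr_smul (snd t) (T_el n)))"
    if x: "x \<in> E0 n" for x :: "(nat,'a) grel"
  proof -
    have xG: "x \<in> G0 n" using x EG by blast
    have gx: "is_grel (poset_n n) (\<le>) x" using x by (simp add: E0_def)
    note diag = G0_R(1)[OF xG n2] and off = G0_R(2)[OF xG n2] and e01 = E0_R[OF x n2]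
    have iff: "Gr_eq_n n x (gr_add (gr_smul (fst t) (gr_of (J 0 n))) (gr_smul (snd t) (T_el n)))
       \<longleftrightarrow> (\<forall>i j. i \<le> j \<longrightarrow> j \<le> n \<longrightarrow> R x i j = fst t + snd t * (if i = 0 \<and> j = n then 0 else 1))"
      for t :: "int\<times>int"
      unfolding Gr_eq_n_iff[OF gx gC2] by (rule all_cong_helper) (rule R_comb2[OF n2])
    define t0 where "t0 = (R x 0 n, R x 0 1 - R x 0 n)"
    show ?thesis
    proof (rule ex1I[of _ t0])
      show "Gr_eq_n n x (gr_add (gr_smul (fst t0) (gr_of (J 0 n))) (gr_smul (snd t0) (T_el n)))"
        unfolding iff
      proof (intro allI impI)
        fix i j :: nat assume ij: "i \<le> j" and jn: "j \<le> n"
        show "R x i j = fst t0 + snd t0 * (if i = 0 \<and> j = n then 0 else 1)"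
        proof (cases "i = j")
          case True
          hence "(if i = 0 \<and> j = n then 0 else 1) = (1::int)" using n2 by auto
          thus ?thesis using True diag[of i] jn e01 by (simp add: t0_def)
        next
          case False
          hence ij': "i < j" using ij by simp
          show ?thesis
          proof (cases "i = 0 \<and> j = n")
            case True thus ?thesis using False by (simp add: t0_def)
          next
            case F2: False
            hence "(if i = 0 \<and> j = n then 0 else 1) = (1::int)" by simp
            thus ?thesis using False off[OF ij' jn F2] by (simp add: t0_def)
          qed
        qed
      qed
    next
      fix t :: "int\<times>int"
      assume "Gr_eq_n n x (gr_add (gr_smul (fst t) (gr_of (J 0 n))) (gr_smul (snd t) (T_el n)))"
      hence h: "\<And>i j. i \<le> j \<Longrightarrow> j \<le> n \<Longrightarrow> R x i j = fst t + snd t * (if i = 0 \<and> j = n then 0 else 1)"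
        unfolding iff by blast
      have e1: "R x 0 n = fst t" using h[of 0 n] n0 by simp
      have e2: "R x 0 1 = fst t + snd t" using h[of 0 1] n2 by simp
      show "t = t0" unfolding t0_def using e1 e2 by (cases t) auto
    qed
  qed
  have GS: "\<exists>!a::int. \<exists>e\<in>E0 n. Gr_eq_n n x (gr_add e (gr_smul a (gr_of S_rep)))"
    if x: "x \<in> G0 n" for x :: "(nat,'a) grel"
  proof -
    have gx: "is_grel (poset_n n) (\<le>) x" using x by (simp add: G0_def)
    note diag = G0_R(1)[OF x n2] and off = G0_R(2)[OF x n2]
    define a0 where "a0 = R x 0 0 - R x 0 1"
    show ?thesis
    proof (rule ex1I[of _ a0])
      define e where "e = (gr_add (gr_smul (R x 0 n) (gr_of (J 0 n))) (gr_smul (R x 0 1 - R x 0 n) (T_el n)) :: (nat,'a) grel)"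
      have eE: "e \<in> E0 n" unfolding e_def by (intro E0_add E0_smul JE TE)
      have ge: "is_grel (poset_n n) (\<le>) e" unfolding e_def by (rule gC2)
      have "Gr_eq_n n x (gr_add e (gr_smul a0 (gr_of S_rep)))"
        unfolding Gr_eq_n_iff[OF gx is_grel_add[OF ge is_grel_smul[OF gS]]]
      proof (intro allI impI)
        fix i j :: nat assume ij: "i \<le> j" and jn: "j \<le> n"
        have re: "R (gr_add e (gr_smul a0 (gr_of S_rep))) i j = R x 0 n + (R x 0 1 - R x 0 n) * (if i = 0 \<and> j = n then 0 else 1) + a0 * (if i = j then 1 else 0)"
          unfolding R_combS[OF ge ij jn] unfolding e_def R_comb2[OF n2 ij jn] ..
        show "R x i j = R (gr_add e (gr_smul a0 (gr_of S_rep))) i j"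
          unfolding re
        proof (cases "i = j")
          case True
          hence "(if i = 0 \<and> j = n then 0 else 1) = (1::int)" using n2 by auto
          thus "R x i j = R x 0 n + (R x 0 1 - R x 0 n) * (if i = 0 \<and> j = n then 0 else 1) + a0 * (if i = j then 1 else 0)"
            using True diag[of i] jn by (simp add: a0_def)
        next
          case False
          hence ij': "i < j" using ij by simp
          show "R x i j = R x 0 n + (R x 0 1 - R x 0 n) * (if i = 0 \<and> j = n then 0 else 1) + a0 * (if i = j then 1 else 0)"
          proof (cases "i = 0 \<and> j = n")
            case True thus ?thesis using False by simp
          next
            case F2: False
            hence "(if i = 0 \<and> j = n then 0 else 1) = (1::int)" by simp
            thus ?thesis using False off[OF ij' jn F2] by simp
          qed
        qed
      qed
      thus "\<exists>e\<in>E0 n. Gr_eq_n n x (gr_add e (gr_smul a0 (gr_of S_rep)))" using eE by blast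
    next
      fix a assume "\<exists>e\<in>E0 n. Gr_eq_n n x (gr_add e (gr_smul a (gr_of S_rep)))"
      then obtain e where eE: "e \<in> E0 n" and eq: "Gr_eq_n n x (gr_add e (gr_smul a (gr_of S_rep)))" by blast
      have ge: "is_grel (poset_n n) (\<le>) e" using eE by (simp add: E0_def)
      have h0: "\<forall>i j. i \<le> j \<longrightarrow> j \<le> n \<longrightarrow> R x i j = R (gr_add e (gr_smul a (gr_of S_rep))) i j"
        using eq Gr_eq_n_iff[OF gx is_grel_add[OF ge is_grel_smul[OF gS]]] by simp
      have h: "R x i j = R e i j + a * (if i = j then 1 else 0)" if ij: "i \<le> j" and jn: "j \<le> n" for i j
      proof -
        have "R x i j = R (gr_add e (gr_smul a (gr_of S_rep))) i j" using h0 ij jn by simp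
        thus ?thesis unfolding R_combS[OF ge ij jn] .
      qed
      have "R x 0 0 = R e 0 0 + a" using h[of 0 0] by simp
      moreover have "R x 0 1 = R e 0 1" using h[of 0 1] n2 by simp
      moreover have "R e 0 1 = R e 0 0" by (rule E0_R[OF eE n2])
      ultimately show "a = a0" unfolding a0_def by simp
    qed
  qed
  show ?thesis unfolding Let_def
  proof (intro conjI)
    show "{gr_of (J 0 n), gr_of S_rep, T_el n} \<subseteq> (G0 n :: (nat,'a) grel set)" using JE TE SG EG by blast
    show "\<forall>x\<in>G0 n. \<exists>!t::int\<times>int\<times>int. Gr_eq_n n x (gr_add (gr_add (gr_smul (fst t) (gr_of (J 0 n) :: (nat,'a) grel)) (gr_smul (fst (snd t)) (gr_of S_rep))) (gr_smul (snd (snd t)) (T_el n)))"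
      using G3 by blast
    show "{gr_of (J 0 n), T_el n} \<subseteq> (E0 n :: (nat,'a) grel set)" using JE TE by blast
    show "\<forall>x\<in>E0 n. \<exists>!t::int\<times>int. Gr_eq_n n x (gr_add (gr_smul (fst t) (gr_of (J 0 n) :: (nat,'a) grel)) (gr_smul (snd t) (T_el n)))"
      using E2 by blast
    show "E0 n \<subseteq> G0 n" by (rule E0_sub_G0)
    show "\<forall>x\<in>G0 n. \<exists>!a::int. \<exists>e\<in>E0 n. Gr_eq_n n x (gr_add e (gr_smul a (gr_of S_rep :: (nat,'a) grel)))"
      using GS by blast
  qed
qed

end
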